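(* Let $U_1$ be a vector space over a field of characteristic zero, let $U_{0-}=\bigoplus_{p\ge1}U_{-p+1}$ and let $U_+$ be the free Lie algebra generated by $U_1$. Then the vector space $U=U_{0-}\oplus U_+$ together with the bracket $[\![\cdot,\cdot]\!]$ described below is a Lie algebra.
   Context: Define $U_{-p+1}=\mathrm{Hom}(U_1,U_{-p+2})$ recursively for $p=1,2,\ldots$ (so $U_0=\mathrm{End}(U_1)$); elements of $U_{-p+1}$ are operators of order $p$. For an operator $A$ of order $p\ge1$ and $x\in U_1$ set $A\circ x=A(x)$, $x\circ A=0$, and for operators $A,B$ of orders $\ge1$ define $A\circ B$ recursively by $(A\circ B)(x)=A\circ B(x)+A(x)\circ B$, extended bilinearly to $U_{0-}$. $U_+=U_1\oplus U_2\oplus\cdots$ is the free Lie algebra on $U_1$ with its natural grading, and $U_{2+}=\bigoplus_{j\ge2}U_j$. The bracket on $U$ is: on $U_{0-}$, $[\![A,B]\!]=A\circ B-B\circ A$; on $U_+$, the free Lie algebra bracket; for $A\in U_{0-}$ and $x\in U_1$, $[\![A,x]\!]=A(x)$; for $A\in U_{0-}$ and $v,w\in U_+$, recursively $[\![A,[\![v,w]\!]]\!]=[\![[\![A,v]\!],w]\!]-[\![[\![A,w]\!],v]\!]$, extended linearly (this recursive definition is compatible with the Jacobi identity in $U_+$ and yields a well-defined bilinear map); and $[\![u,A]\!]=-[\![A,u]\!]$ for $u\in U_+$. *)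

theory Defs
  imports Main "HOL-Library.Function_Algebras" "HOL-Library.Product_Plus"
begin

text \<open>
  The vector space U_1 over the field 'k is represented through a
  basis B (a set of letters of type 'b): vectors of U_1 are finitely supported
  functions 'b => 'k vanishing outside B.

  Operators: an operator of order p (an element of Hom(U_1, U_{-p+2})) is determined
  by its values on basis vectors; iterating, it is the same as an arbitrary
  assignment of a vector of U_1 to every word of length p over B
  (A(b1)(b2)...(bp) is stored at the word [b1,...,bp]).  An element of
  U_{0-} (direct sum over p >= 1) is a function from words to U_1 that vanishes on
  the empty word, on words with letters outside B, and on all words of length
  outside a finite set.  More generally an element of type opr whose value at the
  empty word is nonzero is read as an element of U_1 (+) U_{0-}, the value at []
  being the U_1 part ("mixed" element).

  U_+ is the free Lie algebra on U_1, realised as the Lie subalgebra of the tensor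
  algebra (free associative algebra, functions on words) generated by U_1.
\<close>

type_synonym ('b,'k) vec = "'b \<Rightarrow> 'k"
type_synonym ('b,'k) opr = "'b list \<Rightarrow> 'b \<Rightarrow> 'k"
type_synonym ('b,'k) tens = "'b list \<Rightarrow> 'k"
type_synonym ('b,'k) elt = "('b,'k) opr \<times> ('b,'k) tens"

definition is_vec :: "'b set \<Rightarrow> ('b,'k::zero) vec \<Rightarrow> bool" where
  "is_vec B x \<longleftrightarrow> finite {b. x b \<noteq> 0} \<and> (\<forall>b. b \<notin> B \<longrightarrow> x b = 0)"

definition is_op :: "'b set \<Rightarrow> ('b,'k::zero) opr \<Rightarrow> bool" where
  "is_op B A \<longleftrightarrow> A [] = 0 \<and> (\<forall>w. is_vec B (A w))
     \<and> (\<forall>w. \<not> set w \<subseteq> B \<longrightarrow> A w = 0)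
     \<and> finite {length w | w. A w \<noteq> 0}"

text \<open>A(b): evaluation of an operator at the basis vector b (result is mixed).\<close>
definition ev_letter :: "('b,'k) opr \<Rightarrow> 'b \<Rightarrow> ('b,'k) opr" where
  "ev_letter A b = (\<lambda>w. A (b # w))"

definition apply_vec :: "('b,'k::comm_ring_1) opr \<Rightarrow> ('b,'k) vec \<Rightarrow> ('b,'k) opr" where
  "apply_vec A x = (\<lambda>w c. \<Sum>b\<in>{b. x b \<noteq> 0}. x b * A (b # w) c)"

definition strip :: "('b,'k::zero) opr \<Rightarrow> ('b,'k) opr" where
  "strip A = A([] := 0)"

text \<open>The product A o B, with the conventions A o x = A(x), x o A = 0 for x in U_1
  (the U_1 part of the left factor is ignored; the U_1 part of the right factor is
  applied).  Recursion: (A o B)(b) = A o B(b) + A(b) o B.\<close>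
fun comp :: "('b,'k::comm_ring_1) opr \<Rightarrow> ('b,'k) opr \<Rightarrow> 'b list \<Rightarrow> ('b,'k) vec" where
  "comp A B [] = apply_vec A (B []) []"
| "comp A B (b # w) = apply_vec A (B []) (b # w) + comp A (ev_letter B b) w
                        + comp (ev_letter A b) (strip B) w"

definition br_ops :: "('b,'k::comm_ring_1) opr \<Rightarrow> ('b,'k) opr \<Rightarrow> ('b,'k) opr" where
  "br_ops A B = (\<lambda>w. comp A B w - comp B A w)"

definition tmul :: "('b,'k::comm_ring_1) tens \<Rightarrow> ('b,'k) tens \<Rightarrow> ('b,'k) tens" where
  "tmul f g = (\<lambda>w. \<Sum>i\<in>{0..length w}. f (take i w) * g (drop i w))"

definition tbr :: "('b,'k::comm_ring_1) tens \<Rightarrow> ('b,'k) tens \<Rightarrow> ('b,'k) tens" where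
  "tbr f g = tmul f g - tmul g f"

definition vec_to_tens :: "('b,'k::zero) vec \<Rightarrow> ('b,'k) tens" where
  "vec_to_tens x = (\<lambda>w. case w of [b] \<Rightarrow> x b | _ \<Rightarrow> 0)"

inductive_set lie_poly :: "'b set \<Rightarrow> ('b,'k::comm_ring_1) tens set" for B where
  gen: "is_vec B x \<Longrightarrow> vec_to_tens x \<in> lie_poly B"
| add: "u \<in> lie_poly B \<Longrightarrow> v \<in> lie_poly B \<Longrightarrow> u + v \<in> lie_poly B"
| smult: "u \<in> lie_poly B \<Longrightarrow> (\<lambda>w. c * u w) \<in> lie_poly B"
| brk: "u \<in> lie_poly B \<Longrightarrow> v \<in> lie_poly B \<Longrightarrow> tbr u v \<in> lie_poly B"

definition Ucar :: "'b set \<Rightarrow> ('b,'k::comm_ring_1) elt set" where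
  "Ucar B = {(A, u). is_op B A \<and> u \<in> lie_poly B}"

definition scaleU :: "'k::comm_ring_1 \<Rightarrow> ('b,'k) elt \<Rightarrow> ('b,'k) elt" where
  "scaleU c z = ((\<lambda>w b. c * fst z w b), (\<lambda>w. c * snd z w))"

definition to_U :: "('b,'k::comm_ring_1) opr \<Rightarrow> ('b,'k) elt" where
  "to_U M = (strip M, vec_to_tens (M []))"

definition brU_with ::
  "(('b,'k::comm_ring_1) opr \<Rightarrow> ('b,'k) tens \<Rightarrow> ('b,'k) elt) \<Rightarrow> ('b,'k) elt \<Rightarrow> ('b,'k) elt \<Rightarrow> ('b,'k) elt" where
  "brU_with act z z' = (br_ops (fst z) (fst z'), 0) + act (fst z) (snd z') - act (fst z') (snd z)
                        + (0, tbr (snd z) (snd z'))"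

definition is_action :: "'b set \<Rightarrow> (('b,'k::comm_ring_1) opr \<Rightarrow> ('b,'k) tens \<Rightarrow> ('b,'k) elt) \<Rightarrow> bool" where
  "is_action B act \<longleftrightarrow>
     (\<forall>A u. is_op B A \<and> u \<in> lie_poly B \<longrightarrow> act A u \<in> Ucar B)
   \<and>      (\<forall>A A' u. is_op B A \<and> is_op B A' \<and> u \<in> lie_poly B \<longrightarrow> act (A + A') u = act A u + act A' u)
   \<and> (\<forall>A u u'. is_op B A \<and> u \<in> lie_poly B \<and> u' \<in> lie_poly B \<longrightarrow> act A (u + u') = act A u + act A u')
   \<and> (\<forall>c A u. is_op B A \<and> u \<in> lie_poly B \<longrightarrow> act (\<lambda>w b. c * A w b) u = scaleU c (act A u))
   \<and> (\<forall>c A u. is_op B A \<and> u \<in> lie_poly B \<longrightarrow> act A (\<lambda>w. c * u w) = scaleU c (act A u))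
   \<and> (\<forall>A x. is_op B A \<and> is_vec B x \<longrightarrow> act A (vec_to_tens x) = to_U (apply_vec A x))
   \<and> (\<forall>A v w. is_op B A \<and> v \<in> lie_poly B \<and> w \<in> lie_poly B \<longrightarrow>
        act A (tbr v w) = brU_with act (act A v) (0, w) - brU_with act (act A w) (0, v))"

definition actU :: "'b set \<Rightarrow> ('b,'k::comm_ring_1) opr \<Rightarrow> ('b,'k) tens \<Rightarrow> ('b,'k) elt" where
  "actU B = (SOME act. is_action B act)"

definition brU :: "'b set \<Rightarrow> ('b,'k::comm_ring_1) elt \<Rightarrow> ('b,'k) elt \<Rightarrow> ('b,'k) elt" where
  "brU B = brU_with (actU B)"

definition lie_algebra_on ::
  "'a::ab_group_add set \<Rightarrow> ('k::field \<Rightarrow> 'a \<Rightarrow> 'a) \<Rightarrow> ('a \<Rightarrow> 'a \<Rightarrow> 'a) \<Rightarrow> bool" where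
  "lie_algebra_on V sc br \<longleftrightarrow>
     0 \<in> V \<and> (\<forall>x\<in>V. \<forall>y\<in>V. x + y \<in> V) \<and> (\<forall>c. \<forall>x\<in>V. sc c x \<in> V)
   \<and> (\<forall>x\<in>V. \<forall>y\<in>V. br x y \<in> V)
   \<and> (\<forall>x\<in>V. \<forall>y\<in>V. \<forall>z\<in>V. br (x + y) z = br x z + br y z \<and> br z (x + y) = br z x + br z y)
   \<and> (\<forall>c. \<forall>x\<in>V. \<forall>y\<in>V. br (sc c x) y = sc c (br x y) \<and> br x (sc c y) = sc c (br x y))
   \<and> (\<forall>x\<in>V. br x x = 0)
   \<and> (\<forall>x\<in>V. \<forall>y\<in>V. \<forall>z\<in>V. br x (br y z) + br y (br z x) + br z (br x y) = 0)"

end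

theory Submission
  imports Defs
begin

definition supp :: "('a \<Rightarrow> 'k::zero) \<Rightarrow> 'a set" where
  "supp f = {x. f x \<noteq> 0}"

definition lin :: "('b list \<Rightarrow> 'k::field) \<Rightarrow> ('b list \<Rightarrow> 'k) \<Rightarrow> 'k" where
  "lin f X = (\<Sum>g\<in>supp f. f g * X g)"

abbreviation fin :: "('a \<Rightarrow> 'k::zero) \<Rightarrow> bool" where
  "fin f \<equiv> finite (supp f)"

lemma supp_add: "supp (f + g) \<subseteq> supp f \<union> supp (g::'a \<Rightarrow> 'k::monoid_add)"
  by (auto simp: supp_def)
lemma supp_add': "supp (\<lambda>x. f x + g x) \<subseteq> supp f \<union> supp (g::'a \<Rightarrow> 'k::monoid_add)"
  by (auto simp: supp_def)
lemma fin_add: "fin f \<Longrightarrow> fin g \<Longrightarrow> fin (f + (g::'a \<Rightarrow> 'k::monoid_add))"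
  by (rule finite_subset[OF supp_add]) simp
lemma fin_add': "fin f \<Longrightarrow> fin g \<Longrightarrow> fin (\<lambda>x. f x + (g x::'k::monoid_add))"
  by (rule finite_subset[OF supp_add']) simp
lemma fin_smult: "fin f \<Longrightarrow> fin (\<lambda>x. (c::'k::mult_zero) * f x)"
  by (rule finite_subset[of _ "supp f"]) (auto simp: supp_def)
lemma fin_neg: "fin f \<Longrightarrow> fin (- (f::'a \<Rightarrow> 'k::ab_group_add))"
  by (simp add: supp_def)
lemma fin_diff: "fin f \<Longrightarrow> fin g \<Longrightarrow> fin (f - (g::'a \<Rightarrow> 'k::ab_group_add))"
  by (rule finite_subset[of _ "supp f \<union> supp g"]) (auto simp: supp_def)
lemma fin_zero[simp]: "fin 0" "fin (\<lambda>x. 0)"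
  by (auto simp: supp_def)

lemma lin_superset:
  assumes "finite S" "supp f \<subseteq> S"
  shows "lin f X = (\<Sum>g\<in>S. f g * X g)"
  unfolding lin_def
proof (rule sum.mono_neutral_left)
  show "\<forall>i\<in>S - supp f. f i * X i = 0" by (simp add: supp_def)
qed (use assms in auto)

lemma lin_add1:
  assumes "fin f" "fin g" shows "lin (f + g) X = lin f X + lin g X"
proof -
  have S: "finite (supp f \<union> supp g)" using assms by auto
  show ?thesis
    apply (subst lin_superset[OF S supp_add])
    apply (subst lin_superset[OF S, of f], blast)
    apply (subst lin_superset[OF S, of g], blast)
    by (simp add: distrib_right sum.distrib)
qed

lemma lin_add1':
  assumes "fin f" "fin g" shows "lin (\<lambda>x. f x + g x) X = lin f X + lin g X"
  using lin_add1[OF assms] by (simp add: plus_fun_def)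

lemma lin_smult1: "lin (\<lambda>x. c * f x) X = c * lin f X"
proof (cases "c = 0")
  case True then show ?thesis by (simp add: lin_def supp_def)
next
  case False
  then have "supp (\<lambda>x. c * f x) = supp f" by (auto simp: supp_def)
  then show ?thesis by (simp add: lin_def sum_distrib_left mult.assoc)
qed

lemma lin_neg1: "lin (- f) X = - lin f X"
proof -
  have "supp (- f) = supp f" by (simp add: supp_def)
  then show ?thesis by (simp add: lin_def sum_negf)
qed

lemma lin_diff1:
  assumes "fin f" "fin g" shows "lin (f - g) X = lin f X - lin g X"
  using lin_add1[OF assms(1) fin_neg[OF assms(2)], of X] by (simp add: lin_neg1)

lemma lin_zero1[simp]: "lin 0 X = 0" "lin (\<lambda>x. 0) X = 0"
  by (auto simp: lin_def supp_def)

lemma lin_add2: "lin f (\<lambda>g. X g + Y g) = lin f X + lin f Y"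
  by (simp add: lin_def distrib_left sum.distrib)
lemma lin_diff2: "lin f (\<lambda>g. X g - Y g) = lin f X - lin f Y"
  by (simp add: lin_def right_diff_distrib sum_subtractf)
lemma lin_smult2: "lin f (\<lambda>g. c * X g) = c * lin f X"
  by (simp add: lin_def sum_distrib_left mult.left_commute)
lemma lin_zero2[simp]: "lin f (\<lambda>g. 0) = 0"
  by (simp add: lin_def)
lemma lin_sum2: "lin f (\<lambda>g. \<Sum>i\<in>I. X i g) = (\<Sum>i\<in>I. lin f (X i))"
  unfolding lin_def sum_distrib_left by (rule sum.swap)
lemma lin_cong2: "(\<And>g. f g \<noteq> 0 \<Longrightarrow> X g = Y g) \<Longrightarrow> lin f X = lin f Y"
  by (auto simp: lin_def supp_def intro!: sum.cong)

lemma lin_swap: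
  assumes "fin f" "fin g"
  shows "lin f (\<lambda>a. lin g (\<lambda>b. X a b)) = lin g (\<lambda>b. lin f (\<lambda>a. X a b))"
  unfolding lin_def sum_distrib_left
  by (subst sum.swap) (simp add: algebra_simps)

lemma lin_point: assumes "fin f" shows "lin f (\<lambda>g. if g = w then 1 else 0) = f w"
proof -
  have "lin f (\<lambda>g. if g = w then 1 else 0) = (\<Sum>g\<in>supp f. if g = w then f g else 0)"
    unfolding lin_def by (rule sum.cong) auto
  also have "\<dots> = f w" using assms by (subst sum.delta) (auto simp: supp_def)
  finally show ?thesis .
qed

lemma tmul_Nil[simp]: "tmul f g [] = f [] * g []"
  by (simp add: tmul_def)

lemma tmul_Cons: "tmul f g (c # w) = f [] * g (c # w) + tmul (\<lambda>x. f (c # x)) g w"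
proof -
  have "tmul f g (c # w) = (\<Sum>i\<in>{0..Suc (length w)}. f (take i (c # w)) * g (drop i (c # w)))"
    by (simp add: tmul_def)
  also have "\<dots> = f [] * g (c # w) + (\<Sum>i\<in>{0..length w}. f (c # take i w) * g (drop i w))"
    by (subst sum.atLeast0_atMost_Suc_shift) simp
  finally show ?thesis by (simp add: tmul_def)
qed

lemma tmul_add1: "tmul (f + g) h = tmul f h + tmul g h"
  by (rule ext) (simp add: tmul_def distrib_right sum.distrib)
lemma tmul_add2: "tmul h (f + g) = tmul h f + tmul h g"
  by (rule ext) (simp add: tmul_def distrib_left sum.distrib)
lemma tmul_add1': "tmul (\<lambda>x. f x + g x) h = tmul f h + tmul g h"
  using tmul_add1[of f g h] by (simp add: plus_fun_def)
lemma tmul_smult1: "tmul (\<lambda>x. c * f x) h = (\<lambda>w. c * tmul f h w)"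
  by (rule ext) (simp add: tmul_def sum_distrib_left mult.assoc)
lemma tmul_smult2: "tmul h (\<lambda>x. c * f x) = (\<lambda>w. c * tmul h f w)"
  by (rule ext) (simp add: tmul_def sum_distrib_left algebra_simps)
lemma tmul_zero[simp]: "tmul 0 h = 0" "tmul h 0 = 0" "tmul (\<lambda>x. 0) h = 0" "tmul h (\<lambda>x. 0) = 0"
  by (auto simp: tmul_def fun_eq_iff)
lemma tmul_neg1: "tmul (- f) h = - tmul f h"
  by (rule ext) (simp add: tmul_def sum_negf)
lemma tmul_neg2: "tmul h (- f) = - tmul h f"
  by (rule ext) (simp add: tmul_def sum_negf)
lemma tmul_diff1: "tmul (f - g) h = tmul f h - tmul g h"
  by (rule ext) (simp add: tmul_def left_diff_distrib sum_subtractf)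
lemma tmul_diff2: "tmul h (f - g) = tmul h f - tmul h g"
  by (rule ext) (simp add: tmul_def right_diff_distrib sum_subtractf)

lemma tmul_assoc: "tmul (tmul f g) h = tmul f (tmul g h)"
proof (rule ext)
  fix w show "tmul (tmul f g) h w = tmul f (tmul g h) w"
  proof (induction w arbitrary: f)
    case Nil then show ?case by simp
  next
    case (Cons c w)
    have e: "(\<lambda>x. tmul f g (c # x)) = (\<lambda>x. f [] * g (c # x)) + tmul (\<lambda>x. f (c # x)) g"
      by (rule ext) (simp add: tmul_Cons)
    show ?case
      apply (subst tmul_Cons, subst e, subst tmul_add1)
      apply (simp add: Cons.IH tmul_smult1 tmul_Cons)
      by (simp add: algebra_simps)
  qed
qed

lemma tbr_jacobi:
  "tbr f (tbr g h) + tbr g (tbr h f) + tbr h (tbr f g) = 0"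
  by (simp add: tbr_def tmul_diff1 tmul_diff2 tmul_assoc)


lemma pairs_image: "{p. fst p @ snd p = (e::'a list)} = (\<lambda>i. (take i e, drop i e)) ` {0..length e}"
proof (intro set_eqI iffI)
  fix p :: "'a list \<times> 'a list" assume "p \<in> {p. fst p @ snd p = e}"
  then have h: "fst p @ snd p = e" by simp
  show "p \<in> (\<lambda>i. (take i e, drop i e)) ` {0..length e}"
  proof (rule image_eqI[where x="length (fst p)"])
    show "p = (take (length (fst p)) e, drop (length (fst p)) e)" using h by (cases p) auto
    show "length (fst p) \<in> {0..length e}" using h by auto
  qed
next
  fix p assume "p \<in> (\<lambda>i. (take i e, drop i e)) ` {0..length e}"
  then show "p \<in> {p. fst p @ snd p = e}" by auto
qed

lemma finite_pairs: "finite {p. fst p @ snd p = (e::'a list)}"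
  by (simp add: pairs_image)

lemma tmul_pairs:
  "tmul f g e = (\<Sum>p\<in>{p. fst p @ snd p = e}. f (fst p) * g (snd p))"
proof -
  have inj: "inj_on (\<lambda>i. (take i e, drop i e)) {0..length e}"
  proof (rule inj_onI)
    fix i j assume "i \<in> {0..length e}" "j \<in> {0..length e}" "(take i e, drop i e) = (take j e, drop j e)"
    then have "length (take i e) = length (take j e)" by simp
    then show "i = j" using \<open>i \<in> _\<close> \<open>j \<in> _\<close> by simp
  qed
  show ?thesis unfolding tmul_def pairs_image
    by (subst sum.reindex[OF inj]) simp
qed

lemma tmul_pairs_supp:
  "tmul f g e = (\<Sum>p\<in>{p\<in>supp f \<times> supp g. fst p @ snd p = e}. f (fst p) * g (snd p))"
  unfolding tmul_pairs
  by (rule sum.mono_neutral_right) (auto simp: finite_pairs supp_def)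

lemma supp_tmul: "supp (tmul f g) \<subseteq> (\<lambda>p. fst p @ snd p) ` (supp f \<times> supp g)"
proof
  fix e assume "e \<in> supp (tmul f g)"
  then have "tmul f g e \<noteq> 0" by (simp add: supp_def)
  have "{p\<in>supp f \<times> supp g. fst p @ snd p = e} \<noteq> {}"
  proof
    assume E: "{p\<in>supp f \<times> supp g. fst p @ snd p = e} = {}"
    have "tmul f g e = (\<Sum>p\<in>{p\<in>supp f \<times> supp g. fst p @ snd p = e}. f (fst p) * g (snd p))"
      by (rule tmul_pairs_supp)
    also have "\<dots> = 0" unfolding E by simp
    finally have "tmul f g e = 0" .
    with \<open>tmul f g e \<noteq> 0\<close> show False by simp
  qed
  then show "e \<in> (\<lambda>p. fst p @ snd p) ` (supp f \<times> supp g)" by blast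
qed

lemma fin_tmul: "fin f \<Longrightarrow> fin g \<Longrightarrow> fin (tmul f g)"
  by (rule finite_subset[OF supp_tmul]) simp

lemma fin_tbr: "fin f \<Longrightarrow> fin g \<Longrightarrow> fin (tbr f g)"
  unfolding tbr_def by (intro fin_diff fin_tmul)

lemma lin_tmul:
  assumes f: "fin f" and g: "fin g"
  shows "lin (tmul f g) X = lin f (\<lambda>a. lin g (\<lambda>b. X (a @ b)))"
proof -
  let ?F = "supp f \<times> supp g"
  let ?S = "(\<lambda>p. fst p @ snd p) ` ?F"
  have fF: "finite ?F" using f g by simp
  have "lin (tmul f g) X = (\<Sum>e\<in>?S. tmul f g e * X e)"
    by (rule lin_superset) (use fF supp_tmul in auto)
  also have "\<dots> = (\<Sum>e\<in>?S. \<Sum>p\<in>{p\<in>?F. fst p @ snd p = e}. f (fst p) * g (snd p) * X (fst p @ snd p))"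
    by (rule sum.cong[OF refl]) (simp add: tmul_pairs_supp[of f g] sum_distrib_right)
  also have "\<dots> = (\<Sum>p\<in>?F. f (fst p) * g (snd p) * X (fst p @ snd p))"
    by (rule sum.group) (use fF in auto)
  also have "\<dots> = (\<Sum>a\<in>supp f. \<Sum>b\<in>supp g. f a * g b * X (a @ b))"
    by (subst sum.cartesian_product) (simp add: case_prod_beta)
  also have "\<dots> = lin f (\<lambda>a. lin g (\<lambda>b. X (a @ b)))"
    by (simp add: lin_def sum_distrib_left mult.assoc)
  finally show ?thesis .
qed

lemma supp_vec_to_tens: "supp (vec_to_tens x) = (\<lambda>b. [b]) ` supp x"
proof (rule set_eqI)
  fix w show "w \<in> supp (vec_to_tens x) \<longleftrightarrow> w \<in> (\<lambda>b. [b]) ` supp x"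
  proof (cases w)
    case Nil then show ?thesis by (auto simp: supp_def vec_to_tens_def)
  next
    case (Cons b w') then show ?thesis by (cases w') (auto simp: supp_def vec_to_tens_def)
  qed
qed

lemma fin_vec_to_tens: "fin x \<Longrightarrow> fin (vec_to_tens x)"
  by (simp add: supp_vec_to_tens)

lemma is_vec_fin: "is_vec B x \<Longrightarrow> fin x"
  by (simp add: is_vec_def supp_def)

lemma lin_vec:
  assumes "fin x"
  shows "lin (vec_to_tens x) X = (\<Sum>b\<in>supp x. x b * X [b])"
  unfolding lin_def supp_vec_to_tens
  by (subst sum.reindex) (auto simp: inj_on_def vec_to_tens_def)

definition lvec :: "('b \<Rightarrow> 'k::field) \<Rightarrow> ('b list \<Rightarrow> 'k) \<Rightarrow> 'b list \<Rightarrow> 'k" where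
  "lvec y g = (\<lambda>w. case w of [] \<Rightarrow> 0 | c # w' \<Rightarrow> y c * g w')"

lemma tmul_vec_left:
  fixes y :: "'b \<Rightarrow> 'k::field" and g :: "'b list \<Rightarrow> 'k"
  shows "tmul (vec_to_tens y) g = lvec y g"
proof (rule ext)
  fix w show "tmul (vec_to_tens y) g w = lvec y g w"
  proof (cases w)
    case Nil then show ?thesis by (simp add: lvec_def vec_to_tens_def)
  next
    case (Cons c w')
    have "tmul (\<lambda>x. vec_to_tens y (c # x)) g w' = y c * g w'"
    proof (cases w')
      case Nil then show ?thesis by (simp add: vec_to_tens_def)
    next
      case (Cons d w'')
      have e: "(\<lambda>x. vec_to_tens y (c # x)) = (\<lambda>x::'b list. if x = [] then y c else 0)"
        by (rule ext) (simp add: vec_to_tens_def split: list.splits)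
      have z: "tmul (\<lambda>x::'b list. if x = [] then y c else 0) g (d # w'') = y c * g (d # w'')"
      proof -
        have "tmul (\<lambda>x. (if (x::'b list) = [] then y c else 0)) g (d # w'') =
              y c * g (d # w'') + tmul (\<lambda>x. 0) g w''"
          by (subst tmul_Cons) simp
        then show ?thesis by simp
      qed
      show ?thesis using Cons by (simp add: e z)
    qed
    then show ?thesis using Cons by (simp add: tmul_Cons lvec_def vec_to_tens_def)
  qed
qed

lemma lin_lvec:
  assumes "fin y" "fin g"
  shows "lin (lvec y g) X = (\<Sum>b\<in>supp y. y b * lin g (\<lambda>d. X (b # d)))"
proof -
  have "lin (lvec y g) X = lin (vec_to_tens y) (\<lambda>a. lin g (\<lambda>d. X (a @ d)))"
    by (simp add: tmul_vec_left[symmetric] lin_tmul assms fin_vec_to_tens)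
  also have "\<dots> = (\<Sum>b\<in>supp y. y b * lin g (\<lambda>d. X (b # d)))"
    by (simp add: lin_vec assms)
  finally show ?thesis .
qed

lemma fin_lvec: "fin y \<Longrightarrow> fin g \<Longrightarrow> fin (lvec y g)"
  by (simp add: tmul_vec_left[symmetric] fin_tmul fin_vec_to_tens)

lemma lvec_add1: "lvec (y + z) g = lvec y g + lvec z g"
  by (rule ext) (simp add: lvec_def distrib_right split: list.splits)
lemma lvec_add2: "lvec y (g + h) = lvec y g + lvec y h"
  by (rule ext) (simp add: lvec_def distrib_left split: list.splits)

lemma lie_poly_fin: "u \<in> lie_poly B \<Longrightarrow> fin u"
proof (induction rule: lie_poly.induct)
  case (gen x) show ?case by (rule fin_vec_to_tens[OF is_vec_fin[OF gen]])
next
  case (add u v) show ?case by (intro fin_add add.IH)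
next
  case (smult u c) show ?case by (intro fin_smult smult.IH)
next
  case (brk u v) show ?case by (intro fin_tbr brk.IH)
qed

lemma vec_to_tens_zero[simp]: "vec_to_tens 0 = 0" "vec_to_tens (\<lambda>b. 0) = 0"
  by (auto simp: vec_to_tens_def fun_eq_iff split: list.splits)

lemma is_vec_zero[simp]: "is_vec B 0" "is_vec B (\<lambda>b. 0)"
  by (auto simp: is_vec_def)

lemma lie_poly_zero: "0 \<in> lie_poly B"
proof -
  have "vec_to_tens 0 \<in> lie_poly B" by (intro lie_poly.gen is_vec_zero)
  then show ?thesis by simp
qed

lemma lie_poly_neg: "u \<in> lie_poly B \<Longrightarrow> - u \<in> lie_poly B"
proof -
  assume "u \<in> lie_poly B"
  then have "(\<lambda>w. (-1) * u w) \<in> lie_poly B" by (rule lie_poly.smult)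
  moreover have "(\<lambda>w. (-1) * u w) = - u" by (rule ext) simp
  ultimately show ?thesis by simp
qed

lemma lie_poly_diff: "u \<in> lie_poly B \<Longrightarrow> v \<in> lie_poly B \<Longrightarrow> u - v \<in> lie_poly B"
  using lie_poly.add[OF _ lie_poly_neg, of u B v] by simp

lemma lie_poly_smult': "u \<in> lie_poly B \<Longrightarrow> (\<lambda>w. c * u w) \<in> lie_poly B"
  by (rule lie_poly.smult)


definition lcons :: "'b \<Rightarrow> ('b list \<Rightarrow> 'k::field) \<Rightarrow> 'b list \<Rightarrow> 'k" where
  "lcons b g = (\<lambda>w. case w of [] \<Rightarrow> 0 | c # w' \<Rightarrow> if c = b then g w' else 0)"

definition wd :: "'b list \<Rightarrow> 'b list \<Rightarrow> 'k::field" where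
  "wd g = (\<lambda>e. if g = e then 1 else 0)"

fun Phi :: "('b,'k::field) opr \<Rightarrow> 'b list \<Rightarrow> ('b,'k) tens" where
  "Phi A [] = 0"
| "Phi A (b # g) = lcons b (Phi A g) + lvec (A [b]) (wd g) + Phi (ev_letter A b) g"

definition PhiL :: "('b,'k::field) opr \<Rightarrow> ('b,'k) tens \<Rightarrow> ('b,'k) tens" where
  "PhiL A u = (\<lambda>e. lin u (\<lambda>g. Phi A g e))"

definition Mop :: "('b,'k::field) opr \<Rightarrow> ('b,'k) tens \<Rightarrow> ('b,'k) opr" where
  "Mop A u = (\<lambda>w c. if w = [] then 0 else lin u (\<lambda>g. A (g @ w) c))"

lemma Phi_cong: "(\<And>w. w \<noteq> [] \<Longrightarrow> A w = A' w) \<Longrightarrow> Phi A g = Phi A' g"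
proof (induction g arbitrary: A A')
  case Nil then show ?case by simp
next
  case (Cons b g)
  have "Phi (ev_letter A b) g = Phi (ev_letter A' b) g"
    by (rule Cons.IH) (simp add: ev_letter_def Cons.prems)
  moreover have "Phi A g = Phi A' g"
    by (rule Cons.IH) (simp add: Cons.prems)
  ultimately show ?case using Cons.prems[of "[b]"] by simp
qed

lemma lcons_sum: "lcons b (\<lambda>x. \<Sum>i\<in>I. f i * T i x) = (\<lambda>x. \<Sum>i\<in>I. f i * lcons b (T i) x)"
  by (simp add: lcons_def fun_eq_iff split: list.split)
lemma lvec_sum: "lvec (\<lambda>c. \<Sum>i\<in>I. f i * y i c) h = (\<lambda>x. \<Sum>i\<in>I. f i * lvec (y i) h x)"
  by (simp add: lvec_def sum_distrib_right mult.assoc fun_eq_iff split: list.split)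

lemma Phi_sum:
  "Phi (\<lambda>w c. \<Sum>i\<in>I. f i * A i w c) g = (\<lambda>x. \<Sum>i\<in>I. f i * Phi (A i) g x)"
proof (induction g arbitrary: A)
  case Nil then show ?case by simp
next
  case (Cons b g)
  have e: "ev_letter (\<lambda>w c. \<Sum>i\<in>I. f i * A i w c) b = (\<lambda>w c. \<Sum>i\<in>I. f i * ev_letter (A i) b w c)"
    by (simp add: ev_letter_def)
  show ?case
    apply (rule ext)
    apply (simp only: Phi.simps e Cons.IH lcons_sum lvec_sum plus_fun_apply)
    apply (simp add: sum.distrib distrib_left)
    done
qed

lemma Phi_add:
  "Phi (\<lambda>w c. A w c + A' w c) g = Phi A g + Phi A' g"
proof (induction g arbitrary: A A')
  case Nil then show ?case by simp
next
  case (Cons b g)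
  have e: "ev_letter (\<lambda>w c. A w c + A' w c) b = (\<lambda>w c. ev_letter A b w c + ev_letter A' b w c)"
    by (simp add: ev_letter_def)
  show ?case
    apply (rule ext)
    apply (simp add: e Cons.IH)
    apply (simp add: lcons_def lvec_def split: list.splits)
    apply (simp add: algebra_simps)
    done
qed

lemma Phi_smult:
  "Phi (\<lambda>w c. k * A w c) g = (\<lambda>x. k * Phi A g x)"
  using Phi_sum[of "\<lambda>i. k" "\<lambda>i. A" "{()}" g] by simp

lemma Phi_zero: "Phi (\<lambda>w c. 0) g = 0"
  using Phi_smult[of 0 "\<lambda>w c. 0" g] by (simp add: zero_fun_def)

lemma Phi_diff:
  "Phi (\<lambda>w c. A w c - A' w c) g = Phi A g - Phi A' g"
proof -
  have "Phi (\<lambda>w c. A w c - A' w c) g = Phi (\<lambda>w c. A w c + (-1) * A' w c) g" by simp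
  also have "\<dots> = Phi A g - Phi A' g"
    by (subst Phi_add, subst Phi_smult) (simp add: fun_eq_iff)
  finally show ?thesis .
qed

lemma Phi_single: "Phi A [b] = vec_to_tens (A [b])"
  by (rule ext) (simp add: lcons_def lvec_def wd_def vec_to_tens_def Phi_zero split: list.splits)

lemma PhiL_add1: "fin u \<Longrightarrow> fin v \<Longrightarrow> PhiL A (u + v) = PhiL A u + PhiL A v"
  by (rule ext) (simp add: PhiL_def lin_add1)
lemma PhiL_diff1: "fin u \<Longrightarrow> fin v \<Longrightarrow> PhiL A (u - v) = PhiL A u - PhiL A v"
  by (rule ext) (simp add: PhiL_def lin_diff1)
lemma PhiL_smult1: "PhiL A (\<lambda>w. c * u w) = (\<lambda>e. c * PhiL A u e)"
  by (rule ext) (simp add: PhiL_def lin_smult1)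
lemma PhiL_add2: "PhiL (\<lambda>w c. A w c + A' w c) u = PhiL A u + PhiL A' u"
  by (rule ext) (simp add: PhiL_def Phi_add lin_add2)
lemma PhiL_diff2: "PhiL (\<lambda>w c. A w c - A' w c) u = PhiL A u - PhiL A' u"
  by (rule ext) (simp add: PhiL_def Phi_diff lin_diff2)
lemma PhiL_smult2: "PhiL (\<lambda>w c. k * A w c) u = (\<lambda>e. k * PhiL A u e)"
  by (rule ext) (simp add: PhiL_def Phi_smult lin_smult2)
lemma PhiL_sum2: "PhiL (\<lambda>w c. \<Sum>i\<in>I. f i * A i w c) u = (\<lambda>e. \<Sum>i\<in>I. f i * PhiL (A i) u e)"
  by (rule ext) (simp add: PhiL_def Phi_sum lin_sum2 lin_smult2)
lemma PhiL_cong2: "(\<And>w. w \<noteq> [] \<Longrightarrow> A w = A' w) \<Longrightarrow> PhiL A u = PhiL A' u"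
  unfolding PhiL_def using Phi_cong[of A A'] by simp
lemma PhiL_zero2: "PhiL (\<lambda>w c. 0) u = 0"
  by (rule ext) (simp add: PhiL_def Phi_zero)

lemma Mop_add: "fin u \<Longrightarrow> fin v \<Longrightarrow> Mop A (u + v) = (\<lambda>w c. Mop A u w c + Mop A v w c)"
  by (simp add: Mop_def lin_add1 fun_eq_iff)
lemma Mop_diff: "fin u \<Longrightarrow> fin v \<Longrightarrow> Mop A (u - v) = (\<lambda>w c. Mop A u w c - Mop A v w c)"
  by (simp add: Mop_def lin_diff1 fun_eq_iff)
lemma Mop_smult: "Mop A (\<lambda>w. k * u w) = (\<lambda>w c. k * Mop A u w c)"
  by (simp add: Mop_def lin_smult1 fun_eq_iff)
lemma Mop_Mop:
  assumes "fin u" "fin v"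
  shows "Mop (Mop A u) v = Mop A (tmul u v)"
proof (intro ext)
  fix w c
  show "Mop (Mop A u) v w c = Mop A (tmul u v) w c"
  proof (cases "w = []")
    case True then show ?thesis by (simp add: Mop_def)
  next
    case False
    then have "Mop (Mop A u) v w c = lin v (\<lambda>b. lin u (\<lambda>a. A (a @ b @ w) c))"
      by (simp add: Mop_def)
    also have "\<dots> = lin u (\<lambda>a. lin v (\<lambda>b. A (a @ b @ w) c))"
      by (rule lin_swap[symmetric]) (use assms in auto)
    also have "\<dots> = Mop A (tmul u v) w c"
      using False assms by (simp add: Mop_def lin_tmul)
    finally show ?thesis .
  qed
qed

lemma Mop_vec:
  assumes "fin x"
  shows "Mop A (vec_to_tens x) = (\<lambda>w c. if w = [] then 0 else (\<Sum>b\<in>supp x. x b * A (b # w) c))"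
  using assms by (simp add: Mop_def lin_vec fun_eq_iff)

lemma PhiL_vec:
  assumes "fin x"
  shows "PhiL A (vec_to_tens x) = vec_to_tens (\<lambda>c. \<Sum>b\<in>supp x. x b * A [b] c)"
proof (rule ext)
  fix e
  have "PhiL A (vec_to_tens x) e = (\<Sum>b\<in>supp x. x b * vec_to_tens (A [b]) e)"
    unfolding PhiL_def by (simp only: lin_vec[OF assms] Phi_single)
  also have "\<dots> = vec_to_tens (\<lambda>c. \<Sum>b\<in>supp x. x b * A [b] c) e"
    by (simp add: vec_to_tens_def split: list.split)
  finally show "PhiL A (vec_to_tens x) e = vec_to_tens (\<lambda>c. \<Sum>b\<in>supp x. x b * A [b] c) e" .
qed


lemma lin_lcons: "lin w (\<lambda>d. lcons b (T d) e) = lcons b (\<lambda>e'. lin w (\<lambda>d. T d e')) e"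
  by (cases e) (simp_all add: lcons_def)

lemma lin_lvec_wd: "fin w \<Longrightarrow> lin w (\<lambda>d. lvec y (wd d) e) = lvec y w e"
  by (cases e) (simp_all add: lvec_def wd_def lin_smult2 lin_point)

lemma lvec_as_lcons: "fin x \<Longrightarrow> lvec x T e = (\<Sum>b\<in>supp x. x b * lcons b T e)"
proof (cases e)
  case Nil then show ?thesis by (simp add: lvec_def lcons_def)
next
  case (Cons c e')
  assume f: "fin x"
  have "(\<Sum>b\<in>supp x. x b * lcons b T e) = (\<Sum>b\<in>supp x. if b = c then x b * T e' else 0)"
    using Cons by (intro sum.cong) (auto simp: lcons_def)
  also have "\<dots> = x c * T e'" using f by (subst sum.delta) (auto simp: supp_def)
  finally show ?thesis using Cons by (simp add: lvec_def)
qed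

lemma P_gen:
  assumes x: "fin x" and w: "fin w"
  shows "PhiL A (tmul (vec_to_tens x) w) =
         tmul (PhiL A (vec_to_tens x)) w + tmul (vec_to_tens x) (PhiL A w) + PhiL (Mop A (vec_to_tens x)) w"
proof (rule ext)
  fix e
  have "PhiL A (tmul (vec_to_tens x) w) e = (\<Sum>b\<in>supp x. x b * lin w (\<lambda>d. Phi A (b # d) e))"
    by (simp add: PhiL_def tmul_vec_left lin_lvec x w)
  also have "\<dots> = (\<Sum>b\<in>supp x. x b * (lcons b (PhiL A w) e + lvec (A [b]) w e + PhiL (ev_letter A b) w e))"
    by (intro sum.cong refl arg_cong[where f="\<lambda>t. _ * t"])
       (simp add: lin_add2 lin_lcons lin_lvec_wd w PhiL_def)
  also have "\<dots> = (\<Sum>b\<in>supp x. x b * lcons b (PhiL A w) e) + (\<Sum>b\<in>supp x. x b * lvec (A [b]) w e)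
                 + (\<Sum>b\<in>supp x. x b * PhiL (ev_letter A b) w e)"
    by (simp add: distrib_left sum.distrib)
  also have "(\<Sum>b\<in>supp x. x b * lcons b (PhiL A w) e) = tmul (vec_to_tens x) (PhiL A w) e"
    by (simp add: tmul_vec_left lvec_as_lcons x)
  also have "(\<Sum>b\<in>supp x. x b * lvec (A [b]) w e) = tmul (PhiL A (vec_to_tens x)) w e"
    by (simp add: PhiL_vec x tmul_vec_left lvec_sum)
  also have "(\<Sum>b\<in>supp x. x b * PhiL (ev_letter A b) w e) = PhiL (Mop A (vec_to_tens x)) w e"
  proof -
    have "PhiL (Mop A (vec_to_tens x)) w = PhiL (\<lambda>v c. \<Sum>b\<in>supp x. x b * ev_letter A b v c) w"
      by (rule PhiL_cong2) (simp add: Mop_vec x ev_letter_def fun_eq_iff)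
    then show ?thesis by (simp add: PhiL_sum2)
  qed
  finally show "PhiL A (tmul (vec_to_tens x) w) e =
         (tmul (PhiL A (vec_to_tens x)) w + tmul (vec_to_tens x) (PhiL A w) + PhiL (Mop A (vec_to_tens x)) w) e"
    by (simp add: add_ac)
qed

definition Pprop :: "('b,'k::field) tens \<Rightarrow> bool" where
  "Pprop v \<longleftrightarrow> (\<forall>A w. fin w \<longrightarrow>
     PhiL A (tmul v w) = tmul (PhiL A v) w + tmul v (PhiL A w) + PhiL (Mop A v) w)"

lemma P_lie:
  assumes "v \<in> lie_poly B"
  shows "Pprop v"
  using assms
proof (induction rule: lie_poly.induct)
  case (gen x)
  then show ?case unfolding Pprop_def using P_gen is_vec_fin by blast
next
  case (add u v)
  have fu: "fin u" and fv: "fin v" using add.hyps lie_poly_fin by auto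
  show ?case unfolding Pprop_def
  proof (intro allI impI)
    fix A :: "('a,'b) opr" and w :: "('a,'b) tens" assume w: "fin w"
    have IU: "PhiL A (tmul u w) = tmul (PhiL A u) w + tmul u (PhiL A w) + PhiL (Mop A u) w"
      using add.IH(1) w by (simp add: Pprop_def)
    have IV: "PhiL A (tmul v w) = tmul (PhiL A v) w + tmul v (PhiL A w) + PhiL (Mop A v) w"
      using add.IH(2) w by (simp add: Pprop_def)
    show "PhiL A (tmul (u + v) w) = tmul (PhiL A (u + v)) w + tmul (u + v) (PhiL A w) + PhiL (Mop A (u + v)) w"
      by (simp add: tmul_add1 PhiL_add1 fin_tmul fu fv w IU IV Mop_add PhiL_add2 add_ac)
  qed
next
  case (smult u c)
  have fu: "fin u" using smult.hyps lie_poly_fin by auto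
  show ?case unfolding Pprop_def
  proof (intro allI impI)
    fix A :: "('a,'b) opr" and w :: "('a,'b) tens" assume w: "fin w"
    have IU: "PhiL A (tmul u w) = tmul (PhiL A u) w + tmul u (PhiL A w) + PhiL (Mop A u) w"
      using smult.IH w by (simp add: Pprop_def)
    show "PhiL A (tmul (\<lambda>x. c * u x) w) = tmul (PhiL A (\<lambda>x. c * u x)) w + tmul (\<lambda>x. c * u x) (PhiL A w)
           + PhiL (Mop A (\<lambda>x. c * u x)) w"
      by (simp add: tmul_smult1 PhiL_smult1 IU Mop_smult PhiL_smult2 distrib_left fun_eq_iff)
  qed
next
  case (brk u v)
  have fu: "fin u" and fv: "fin v" using brk.hyps lie_poly_fin by auto
  show ?case unfolding Pprop_def
  proof (intro allI impI)
    fix A :: "('a,'b) opr" and w :: "('a,'b) tens" assume w: "fin w"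
    have IU: "\<And>A w. fin w \<Longrightarrow> PhiL A (tmul u w) = tmul (PhiL A u) w + tmul u (PhiL A w) + PhiL (Mop A u) w"
      using brk.IH(1) by (simp add: Pprop_def)
    have IV: "\<And>A w. fin w \<Longrightarrow> PhiL A (tmul v w) = tmul (PhiL A v) w + tmul v (PhiL A w) + PhiL (Mop A v) w"
      using brk.IH(2) by (simp add: Pprop_def)
    have fuw: "fin (tmul u w)" and fvw: "fin (tmul v w)" using fu fv w by (auto intro: fin_tmul)
    have fuv: "fin (tmul u v)" and fvu: "fin (tmul v u)" using fu fv by (auto intro: fin_tmul)
    have L: "PhiL A (tmul (tbr u v) w) = PhiL A (tmul u (tmul v w)) - PhiL A (tmul v (tmul u w))"
      by (simp add: tbr_def tmul_diff1 tmul_assoc PhiL_diff1 fin_tmul fu fv w)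
    have R1: "PhiL A (tbr u v) = PhiL A (tmul u v) - PhiL A (tmul v u)"
      by (simp add: tbr_def PhiL_diff1 fuv fvu)
    have R3: "PhiL (Mop A (tbr u v)) w = PhiL (Mop (Mop A u) v) w - PhiL (Mop (Mop A v) u) w"
      by (simp add: tbr_def Mop_diff fuv fvu PhiL_diff2 Mop_Mop fu fv)
    show "PhiL A (tmul (tbr u v) w) = tmul (PhiL A (tbr u v)) w + tmul (tbr u v) (PhiL A w) + PhiL (Mop A (tbr u v)) w"
      apply (simp only: L R1 R3 IU[OF fvw] IV[OF fuw] IU[OF fv] IV[OF fu] IU[OF w] IV[OF w])
      apply (simp only: IU[OF w] IV[OF w] tbr_def tmul_add1 tmul_add2 tmul_diff1 tmul_diff2 tmul_assoc)
      apply (simp add: algebra_simps)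
      done
  qed
qed


lemma PhiL_tbr:
  assumes u: "u \<in> lie_poly B" and v: "v \<in> lie_poly B"
  shows "PhiL A (tbr u v) = tbr (PhiL A u) v + PhiL (Mop A u) v - (tbr (PhiL A v) u + PhiL (Mop A v) u)"
proof -
  have fu: "fin u" and fv: "fin v" using u v lie_poly_fin by auto
  have Pu: "Pprop u" and Pv: "Pprop v" using u v P_lie by auto
  have 1: "PhiL A (tmul u v) = tmul (PhiL A u) v + tmul u (PhiL A v) + PhiL (Mop A u) v"
    using Pu fv by (simp add: Pprop_def)
  have 2: "PhiL A (tmul v u) = tmul (PhiL A v) u + tmul v (PhiL A u) + PhiL (Mop A v) u"
    using Pv fu by (simp add: Pprop_def)
  show ?thesis
    by (simp add: tbr_def PhiL_diff1 fin_tmul fu fv 1 2 algebra_simps)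
qed

lemma Mop_tbr:
  assumes u: "fin u" and v: "fin v"
  shows "Mop A (tbr u v) = (\<lambda>w c. Mop (Mop A u) v w c - Mop (Mop A v) u w c)"
  by (simp add: tbr_def Mop_diff fin_tmul u v Mop_Mop)

lemma fin_vec_sum:
  fixes y :: "'a \<Rightarrow> 'b \<Rightarrow> 'k::field"
  assumes "finite I" "\<And>i. i \<in> I \<Longrightarrow> fin (y i)"
  shows "fin (\<lambda>c. \<Sum>i\<in>I. f i * y i c)"
proof (rule finite_subset[of _ "\<Union>i\<in>I. supp (y i)"])
  show "supp (\<lambda>c. \<Sum>i\<in>I. f i * y i c) \<subseteq> (\<Union>i\<in>I. supp (y i))"
  proof
    fix c assume "c \<in> supp (\<lambda>c. \<Sum>i\<in>I. f i * y i c)"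
    then have "(\<Sum>i\<in>I. f i * y i c) \<noteq> 0" by (simp add: supp_def)
    then obtain i where "i \<in> I" "f i * y i c \<noteq> 0" by (meson sum.neutral)
    then show "c \<in> (\<Union>i\<in>I. supp (y i))" by (auto simp: supp_def)
  qed
qed (use assms in auto)

lemma is_vec_sum:
  fixes y :: "'a \<Rightarrow> 'b \<Rightarrow> 'k::field"
  assumes "finite I" "\<And>i. i \<in> I \<Longrightarrow> is_vec B (y i)"
  shows "is_vec B (\<lambda>c. \<Sum>i\<in>I. f i * y i c)"
proof -
  have "fin (\<lambda>c. \<Sum>i\<in>I. f i * y i c)"
    by (rule fin_vec_sum) (use assms is_vec_fin in auto)
  moreover have "\<forall>c. c \<notin> B \<longrightarrow> (\<Sum>i\<in>I. f i * y i c) = 0"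
  proof (intro allI impI sum.neutral ballI)
    fix c i assume "c \<notin> B" "i \<in> I"
    then have "y i c = 0" using assms(2)[of i] by (simp add: is_vec_def)
    then show "f i * y i c = 0" by simp
  qed
  ultimately show ?thesis by (simp add: is_vec_def supp_def)
qed

lemma is_op_Mop:
  assumes A: "is_op B A" and u: "fin u"
  shows "is_op B (Mop A u)"
proof -
  have A1: "\<And>w. is_vec B (A w)" and A2: "\<And>w. \<not> set w \<subseteq> B \<Longrightarrow> A w = 0"
    and A3: "finite {length w | w. A w \<noteq> 0}" using A by (auto simp: is_op_def)
  have V: "is_vec B (Mop A u w)" for w
  proof (cases "w = []")
    case True then show ?thesis by (simp add: Mop_def is_vec_def)
  next
    case False
    have "is_vec B (\<lambda>c. \<Sum>g\<in>supp u. u g * A (g @ w) c)"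
      by (rule is_vec_sum) (use u A1 in auto)
    then show ?thesis using False by (simp add: Mop_def lin_def)
  qed
  have Z: "Mop A u w = 0" if "\<not> set w \<subseteq> B" for w
    using that A2 by (auto simp: Mop_def lin_def fun_eq_iff)
  have L: "finite {length w | w. Mop A u w \<noteq> 0}"
  proof (rule finite_subset[of _ "(\<lambda>(l, g). l - length g) ` ({length w | w. A w \<noteq> 0} \<times> supp u)"])
    show "{length w | w. Mop A u w \<noteq> 0} \<subseteq> (\<lambda>(l, g). l - length g) ` ({length w | w. A w \<noteq> 0} \<times> supp u)"
    proof
      fix n assume "n \<in> {length w | w. Mop A u w \<noteq> 0}"
      then obtain w where n: "n = length w" and nz: "Mop A u w \<noteq> 0" by auto
      then obtain c where "Mop A u w c \<noteq> 0" by (auto simp: fun_eq_iff)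
      then have "(\<Sum>g\<in>supp u. u g * A (g @ w) c) \<noteq> 0" by (auto simp: Mop_def lin_def split: if_splits)
      then obtain g where g: "g \<in> supp u" "u g * A (g @ w) c \<noteq> 0" by (meson sum.neutral)
      then have "A (g @ w) \<noteq> 0" by auto
      then have "(length (g @ w), g) \<in> {length w | w. A w \<noteq> 0} \<times> supp u" using g by auto
      moreover have "n = (\<lambda>(l, g). l - length g) (length (g @ w), g)" using n by simp
      ultimately show "n \<in> (\<lambda>(l, g). l - length g) ` ({length w | w. A w \<noteq> 0} \<times> supp u)" by blast
    qed
  qed (use A3 u in auto)
  show ?thesis unfolding is_op_def using V Z L by (auto simp: Mop_def fun_eq_iff)
qed

lemma PhiL_lie:
  fixes u :: "('b,'k::field) tens"
  assumes "u \<in> lie_poly B"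
  shows "\<forall>A. is_op B A \<longrightarrow> PhiL A u \<in> lie_poly B"
  using assms
proof (induction rule: lie_poly.induct)
  case (gen x)
  show ?case
  proof (intro allI impI)
    fix A :: "('b,'k) opr" assume A: "is_op B A"
    have "is_vec B (\<lambda>c. \<Sum>b\<in>supp x. x b * A [b] c)"
      by (rule is_vec_sum) (use gen is_vec_fin A in \<open>auto simp: is_op_def\<close>)
    then show "PhiL A (vec_to_tens x) \<in> lie_poly B"
      using PhiL_vec[OF is_vec_fin[OF gen]] by (simp add: lie_poly.gen)
  qed
next
  case (add u v)
  show ?case
  proof (intro allI impI)
    fix A :: "('b,'k) opr" assume A: "is_op B A"
    have e: "PhiL A (u + v) = PhiL A u + PhiL A v"
      by (rule PhiL_add1) (use add.hyps lie_poly_fin in auto)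
    show "PhiL A (u + v) \<in> lie_poly B"
      unfolding e by (rule lie_poly.add) (use add.IH A in auto)
  qed
next
  case (smult u c)
  then show ?case by (simp add: PhiL_smult1 lie_poly.smult)
next
  case (brk u v)
  show ?case
  proof (intro allI impI)
    fix A :: "('b,'k) opr" assume A: "is_op B A"
    have m1: "is_op B (Mop A u)" by (rule is_op_Mop[OF A lie_poly_fin[OF brk.hyps(1)]])
    have m2: "is_op B (Mop A v)" by (rule is_op_Mop[OF A lie_poly_fin[OF brk.hyps(2)]])
    show "PhiL A (tbr u v) \<in> lie_poly B"
      unfolding PhiL_tbr[OF brk.hyps]
      by (intro lie_poly_diff lie_poly.add lie_poly.brk brk.hyps)
         (use brk.IH A m1 m2 in auto)
  qed
qed

lemma comp_zero2: "comp A (\<lambda>w c. 0) w = 0"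
proof (induction w arbitrary: A)
  case Nil then show ?case by (simp add: apply_vec_def)
next
  case (Cons b w)
  have e1: "ev_letter (\<lambda>w c. 0) b = (\<lambda>w c. 0)" by (simp add: ev_letter_def)
  have e2: "strip (\<lambda>w c. 0) = (\<lambda>w c. 0)" by (simp add: strip_def fun_eq_iff)
  show ?case by (simp add: apply_vec_def e1 e2 Cons.IH)
qed

lemma comp_zero1: "comp (\<lambda>w c. 0) B w = 0"
proof (induction w arbitrary: B)
  case Nil then show ?case by (simp add: apply_vec_def)
next
  case (Cons b w)
  have e1: "ev_letter (\<lambda>w c. 0) b = (\<lambda>w c. 0)" by (simp add: ev_letter_def)
  show ?case by (simp add: apply_vec_def e1 Cons.IH)
qed

lemma br_ops_zero2: "br_ops A 0 = 0"
  using comp_zero1[of A] comp_zero2[of A] by (simp add: br_ops_def zero_fun_def fun_eq_iff)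

definition actD :: "('b,'k::field) opr \<Rightarrow> ('b,'k) tens \<Rightarrow> ('b,'k) elt" where
  "actD A u = (Mop A u, PhiL A u)"

lemma Mop_zero_op: "Mop 0 u = 0"
  by (simp add: Mop_def fun_eq_iff)

lemma PhiL_zero_op: "PhiL 0 u = 0"
  using PhiL_zero2[of u] by (simp add: zero_fun_def)

lemma actD_zero_op: "actD 0 u = 0"
  by (simp add: actD_def Mop_zero_op PhiL_zero_op zero_prod_def)

lemma is_action_actD: "is_action B (actD :: ('b,'k::field) opr \<Rightarrow> ('b,'k) tens \<Rightarrow> ('b,'k) elt)"
  unfolding is_action_def
proof (intro conjI allI impI)
  fix A :: "('b,'k) opr" and u :: "('b,'k) tens" assume h: "is_op B A \<and> u \<in> lie_poly B"
  then have "is_op B (Mop A u)" by (intro is_op_Mop lie_poly_fin) auto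
  then show "actD A u \<in> Ucar B"
    using h PhiL_lie[of u B] by (simp add: actD_def Ucar_def)
next
  fix A A' :: "('b,'k) opr" and u :: "('b,'k) tens" assume h: "is_op B A \<and> is_op B A' \<and> u \<in> lie_poly B"
  have "PhiL (A + A') u = PhiL A u + PhiL A' u"
    using PhiL_add2[of A A' u] by (simp add: plus_fun_def)
  then show "actD (A + A') u = actD A u + actD A' u"
    by (simp add: actD_def Mop_def lin_add2 fun_eq_iff)
next
  fix A :: "('b,'k) opr" and u u' :: "('b,'k) tens" assume h: "is_op B A \<and> u \<in> lie_poly B \<and> u' \<in> lie_poly B"
  then have f: "fin u" "fin u'" by (auto intro: lie_poly_fin)
  show "actD A (u + u') = actD A u + actD A u'"
    by (simp add: actD_def Mop_add PhiL_add1 f fun_eq_iff)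
next
  fix c :: 'k and A :: "('b,'k) opr" and u :: "('b,'k) tens" assume h: "is_op B A \<and> u \<in> lie_poly B"
  show "actD (\<lambda>w b. c * A w b) u = scaleU c (actD A u)"
    by (simp add: actD_def scaleU_def PhiL_smult2 Mop_def lin_smult2 fun_eq_iff)
next
  fix c :: 'k and A :: "('b,'k) opr" and u :: "('b,'k) tens" assume h: "is_op B A \<and> u \<in> lie_poly B"
  show "actD A (\<lambda>w. c * u w) = scaleU c (actD A u)"
    by (simp add: actD_def scaleU_def PhiL_smult1 Mop_smult)
next
  fix A :: "('b,'k) opr" and x :: "('b,'k) vec" assume h: "is_op B A \<and> is_vec B x"
  then have fx: "fin x" using is_vec_fin by blast
  note m = Mop_vec[OF fx, of A]
  note p = PhiL_vec[OF fx, of A]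
  show "actD A (vec_to_tens x) = to_U (apply_vec A x)"
    unfolding actD_def to_U_def m p by (simp add: strip_def apply_vec_def supp_def fun_eq_iff)
next
  fix A :: "('b,'k) opr" and v w :: "('b,'k) tens" assume h: "is_op B A \<and> v \<in> lie_poly B \<and> w \<in> lie_poly B"
  then have v: "v \<in> lie_poly B" and w: "w \<in> lie_poly B" by auto
  have fv: "fin v" and fw: "fin w" using v w lie_poly_fin by auto
  have brw: "brU_with actD (M, T) (0, y) = (Mop M y, PhiL M y + tbr T y)" for M T y
    by (simp add: brU_with_def br_ops_zero2 actD_def Mop_zero_op PhiL_zero_op zero_prod_def)
  show "actD A (tbr v w) = brU_with actD (actD A v) (0, w) - brU_with actD (actD A w) (0, v)"
    unfolding actD_def brw
    by (simp add: PhiL_tbr[OF v w] Mop_tbr fv fw fun_eq_iff algebra_simps)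
qed

lemma actU_is_action: "is_action B (actU B :: ('b,'k::field) opr \<Rightarrow> ('b,'k) tens \<Rightarrow> ('b,'k) elt)"
  unfolding actU_def by (rule someI[of "is_action B", OF is_action_actD])


definition vfin :: "('b,'k::zero) opr \<Rightarrow> bool" where
  "vfin A \<longleftrightarrow> (\<forall>w. fin (A w))"

definition bounded :: "('b,'k::zero) opr \<Rightarrow> nat \<Rightarrow> bool" where
  "bounded A n \<longleftrightarrow> (\<forall>w. A w \<noteq> 0 \<longrightarrow> length w \<le> n)"

lemma av_superset:
  assumes "finite S" "supp y \<subseteq> S"
  shows "apply_vec A y w c = (\<Sum>b\<in>S. y b * A (b # w) c)"
  unfolding apply_vec_def
  by (rule sum.mono_neutral_left) (use assms in \<open>auto simp: supp_def\<close>)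

lemma av_lin2:
  assumes "fin y1" "fin y2"
  shows "apply_vec A (\<lambda>c. k1 * y1 c + k2 * y2 c) w c = k1 * apply_vec A y1 w c + k2 * apply_vec A y2 w c"
proof -
  let ?S = "supp y1 \<union> supp y2"
  have S: "finite ?S" using assms by auto
  show ?thesis
    apply (subst av_superset[OF S])
     apply (auto simp: supp_def)[1]
    apply (subst av_superset[OF S, of y1], blast)
    apply (subst av_superset[OF S, of y2], blast)
    by (simp add: sum_distrib_left sum.distrib algebra_simps)
qed

lemma av_sum2:
  fixes y :: "'i \<Rightarrow> 'b \<Rightarrow> 'k::field"
  assumes "finite I" "\<And>i. i \<in> I \<Longrightarrow> fin (y i)"
  shows "apply_vec A (\<lambda>c. \<Sum>i\<in>I. f i * y i c) w c = (\<Sum>i\<in>I. f i * apply_vec A (y i) w c)"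
proof -
  let ?S = "\<Union>i\<in>I. supp (y i)"
  have S: "finite ?S" using assms by auto
  have s1: "supp (\<lambda>c. \<Sum>i\<in>I. f i * y i c) \<subseteq> ?S"
  proof
    fix c assume "c \<in> supp (\<lambda>c. \<Sum>i\<in>I. f i * y i c)"
    then have "(\<Sum>i\<in>I. f i * y i c) \<noteq> 0" by (simp add: supp_def)
    then obtain i where "i \<in> I" "f i * y i c \<noteq> 0" by (meson sum.neutral)
    then show "c \<in> ?S" by (auto simp: supp_def)
  qed
  have "apply_vec A (\<lambda>c. \<Sum>i\<in>I. f i * y i c) w c = (\<Sum>b\<in>?S. (\<Sum>i\<in>I. f i * y i b) * A (b # w) c)"
    by (rule av_superset[OF S s1])
  also have "\<dots> = (\<Sum>b\<in>?S. \<Sum>i\<in>I. f i * (y i b * A (b # w) c))"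
    by (simp add: sum_distrib_right mult.assoc)
  also have "\<dots> = (\<Sum>i\<in>I. \<Sum>b\<in>?S. f i * (y i b * A (b # w) c))"
    by (rule sum.swap)
  also have "\<dots> = (\<Sum>i\<in>I. f i * apply_vec A (y i) w c)"
  proof (rule sum.cong[OF refl])
    fix i assume "i \<in> I"
    then have "supp (y i) \<subseteq> ?S" by blast
    then show "(\<Sum>b\<in>?S. f i * (y i b * A (b # w) c)) = f i * apply_vec A (y i) w c"
      by (simp add: av_superset[OF S] sum_distrib_left)
  qed
  finally show ?thesis .
qed

lemma av_lin1:
  "apply_vec (\<lambda>w c. k1 * A1 w c + k2 * A2 w c) y w c = k1 * apply_vec A1 y w c + k2 * apply_vec A2 y w c"
  by (simp add: apply_vec_def sum_distrib_left sum.distrib algebra_simps)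

lemma av_sum1:
  "apply_vec (\<lambda>w c. \<Sum>i\<in>I. f i * A i w c) y w c = (\<Sum>i\<in>I. f i * apply_vec (A i) y w c)"
proof -
  have "apply_vec (\<lambda>w c. \<Sum>i\<in>I. f i * A i w c) y w c
        = (\<Sum>b\<in>{b. y b \<noteq> 0}. \<Sum>i\<in>I. f i * (y b * A i (b # w) c))"
    by (simp add: apply_vec_def sum_distrib_left mult.left_commute)
  also have "\<dots> = (\<Sum>i\<in>I. \<Sum>b\<in>{b. y b \<noteq> 0}. f i * (y b * A i (b # w) c))"
    by (rule sum.swap)
  also have "\<dots> = (\<Sum>i\<in>I. f i * apply_vec (A i) y w c)"
    by (simp add: apply_vec_def sum_distrib_left)
  finally show ?thesis .
qed

lemma av_zero2: "apply_vec A (\<lambda>c. 0) w c = 0"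
  by (simp add: apply_vec_def)

lemma vfin_ev: "vfin B \<Longrightarrow> vfin (ev_letter B b)"
  by (simp add: vfin_def ev_letter_def)
lemma vfin_strip: "vfin B \<Longrightarrow> vfin (strip B)"
  by (simp add: vfin_def strip_def)

lemma comp_lin1:
  "comp (\<lambda>w c. k1 * A1 w c + k2 * A2 w c) B w c = k1 * comp A1 B w c + k2 * comp A2 B w c"
proof (induction w arbitrary: A1 A2 B c)
  case Nil then show ?case by (simp add: av_lin1)
next
  case (Cons b w)
  have e: "ev_letter (\<lambda>w c. k1 * A1 w c + k2 * A2 w c) b = (\<lambda>w c. k1 * ev_letter A1 b w c + k2 * ev_letter A2 b w c)"
    by (simp add: ev_letter_def)
  show ?case
    apply (simp only: comp.simps plus_fun_apply e av_lin1 Cons.IH)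
    by (simp add: distrib_left add_ac)
qed

lemma comp_lin2:
  fixes B1 B2 :: "('b,'k::field) opr"
  shows "vfin B1 \<Longrightarrow> vfin B2 \<Longrightarrow>
   comp A (\<lambda>w c. k1 * B1 w c + k2 * B2 w c) w c = k1 * comp A B1 w c + k2 * comp A B2 w c"
proof (induction w arbitrary: A B1 B2 c)
  case Nil
  have "apply_vec A (\<lambda>c. k1 * B1 [] c + k2 * B2 [] c) [] c = k1 * apply_vec A (B1 []) [] c + k2 * apply_vec A (B2 []) [] c"
    by (rule av_lin2) (use Nil.prems in \<open>auto simp: vfin_def\<close>)
  then show ?case by simp
next
  case (Cons b w)
  have e: "ev_letter (\<lambda>w c. k1 * B1 w c + k2 * B2 w c) b = (\<lambda>w c. k1 * ev_letter B1 b w c + k2 * ev_letter B2 b w c)"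
    by (simp add: ev_letter_def)
  have s: "strip (\<lambda>w c. k1 * B1 w c + k2 * B2 w c) = (\<lambda>w c. k1 * strip B1 w c + k2 * strip B2 w c)"
    by (simp add: strip_def fun_eq_iff)
  note IH1 = Cons.IH[OF vfin_ev[OF Cons.prems(1)] vfin_ev[OF Cons.prems(2)]]
  note IH2 = Cons.IH[OF vfin_strip[OF Cons.prems(1)] vfin_strip[OF Cons.prems(2)]]
  have a: "apply_vec A (\<lambda>c. k1 * B1 [] c + k2 * B2 [] c) (b # w) c =
           k1 * apply_vec A (B1 []) (b # w) c + k2 * apply_vec A (B2 []) (b # w) c"
    by (rule av_lin2) (use Cons.prems in \<open>auto simp: vfin_def\<close>)
  show ?case
    apply (simp only: comp.simps plus_fun_apply e s a IH1 IH2)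
    by (simp add: distrib_left add_ac)
qed

lemma comp_sum1:
  "comp (\<lambda>w c. \<Sum>i\<in>I. f i * A i w c) B w c = (\<Sum>i\<in>I. f i * comp (A i) B w c)"
proof (induction w arbitrary: A B c)
  case Nil then show ?case by (simp add: av_sum1)
next
  case (Cons b w)
  have e: "ev_letter (\<lambda>w c. \<Sum>i\<in>I. f i * A i w c) b = (\<lambda>w c. \<Sum>i\<in>I. f i * ev_letter (A i) b w c)"
    by (simp add: ev_letter_def)
  show ?case
    apply (simp only: comp.simps plus_fun_apply e av_sum1 Cons.IH)
    by (simp add: distrib_left sum.distrib)
qed

lemma comp_sum2:
  fixes B :: "'i \<Rightarrow> ('b,'k::field) opr"
  shows "finite I \<Longrightarrow> (\<And>i. i \<in> I \<Longrightarrow> vfin (B i)) \<Longrightarrow>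
   comp A (\<lambda>w c. \<Sum>i\<in>I. f i * B i w c) w c = (\<Sum>i\<in>I. f i * comp A (B i) w c)"
proof (induction w arbitrary: A B c)
  case Nil
  have "apply_vec A (\<lambda>c. \<Sum>i\<in>I. f i * B i [] c) [] c = (\<Sum>i\<in>I. f i * apply_vec A (B i []) [] c)"
    by (rule av_sum2) (use Nil.prems in \<open>auto simp: vfin_def\<close>)
  then show ?case by simp
next
  case (Cons b w)
  have e: "ev_letter (\<lambda>w c. \<Sum>i\<in>I. f i * B i w c) b = (\<lambda>w c. \<Sum>i\<in>I. f i * ev_letter (B i) b w c)"
    by (simp add: ev_letter_def)
  have s: "strip (\<lambda>w c. \<Sum>i\<in>I. f i * B i w c) = (\<lambda>w c. \<Sum>i\<in>I. f i * strip (B i) w c)"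
    by (simp add: strip_def fun_eq_iff)
  have v1: "\<And>i. i \<in> I \<Longrightarrow> vfin (ev_letter (B i) b)" by (rule vfin_ev[OF Cons.prems(2)])
  have v2: "\<And>i. i \<in> I \<Longrightarrow> vfin (strip (B i))" by (rule vfin_strip[OF Cons.prems(2)])
  have a: "apply_vec A (\<lambda>c. \<Sum>i\<in>I. f i * B i [] c) (b # w) c = (\<Sum>i\<in>I. f i * apply_vec A (B i []) (b # w) c)"
    by (rule av_sum2) (use Cons.prems in \<open>auto simp: vfin_def\<close>)
  show ?case
    apply (simp only: comp.simps plus_fun_apply e s a)
    apply (simp only: Cons.IH[OF Cons.prems(1) v1] Cons.IH[OF Cons.prems(1) v2])
    by (simp add: sum.distrib distrib_left)
qed

lemma strip_strip: "strip (strip M) = strip M"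
  by (simp add: strip_def)
lemma ev_strip: "ev_letter (strip M) b = ev_letter M b"
  by (simp add: strip_def ev_letter_def fun_eq_iff)

lemma comp_split2: "comp A M w = comp A (strip M) w + apply_vec A (M []) w"
proof (cases w)
  case Nil
  then show ?thesis by (simp add: strip_def apply_vec_def fun_eq_iff)
next
  case (Cons b w')
  have z: "apply_vec A (strip M []) (b # w') = 0" by (simp add: strip_def apply_vec_def fun_eq_iff)
  show ?thesis using Cons by (simp add: z ev_strip strip_strip)
qed

lemma av_strip: "w \<noteq> [] \<Longrightarrow> apply_vec (strip A) y w = apply_vec A y w"
  by (simp add: apply_vec_def strip_def)

lemma comp_strip1: "comp (strip A) B w = comp A B w"
proof (induction w arbitrary: A B)
  case Nil then show ?case by (simp add: apply_vec_def strip_def)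
next
  case (Cons b w) then show ?case by (simp add: av_strip ev_strip)
qed

lemma comp_Nil_zero: "B [] = 0 \<Longrightarrow> comp A B [] = 0"
  by (simp add: apply_vec_def fun_eq_iff)

lemma comp_Cons_pure: "B [] = 0 \<Longrightarrow> comp A B (b # w) = comp A (ev_letter B b) w + comp (ev_letter A b) B w"
proof -
  assume B: "B [] = 0"
  then have sB: "strip B = B" by (simp add: strip_def fun_eq_iff)
  have a: "apply_vec A (B []) = (\<lambda>w c. 0)" using B by (simp add: apply_vec_def fun_eq_iff)
  have "comp A B (b # w) = apply_vec A (B []) (b # w) + comp A (ev_letter B b) w + comp (ev_letter A b) (strip B) w"
    by (rule comp.simps(2))
  also have "\<dots> = comp A (ev_letter B b) w + comp (ev_letter A b) B w"
    unfolding a sB by (simp add: zero_fun_def[symmetric])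
  finally show ?thesis .
qed


lemma is_op_vfin: "is_op Bs A \<Longrightarrow> vfin A"
  unfolding vfin_def
proof
  fix w assume "is_op Bs A"
  then have "is_vec Bs (A w)" by (simp add: is_op_def)
  then show "fin (A w)" by (rule is_vec_fin)
qed

lemma is_op_Nil: "is_op Bs A \<Longrightarrow> A [] = 0"
  by (simp add: is_op_def)

lemma is_op_bounded: "is_op Bs A \<Longrightarrow> \<exists>n. bounded A n"
proof -
  assume "is_op Bs A"
  then have f: "finite {length w | w. A w \<noteq> 0}" by (simp add: is_op_def)
  then obtain n where "\<forall>l \<in> {length w | w. A w \<noteq> 0}. l \<le> n"
    using finite_nat_set_iff_bounded_le by blast
  then have "bounded A n" by (auto simp: bounded_def)
  then show ?thesis by blast
qed

lemma bounded_finite: "bounded A n \<Longrightarrow> finite {length w | w. A w \<noteq> 0}"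
  by (rule finite_subset[of _ "{0..n}"]) (auto simp: bounded_def)

lemma is_vec_add:
  assumes "is_vec Bs x" "is_vec Bs y" shows "is_vec Bs (\<lambda>c. x c + (y c :: 'k::field))"
proof -
  have "{c. x c + y c \<noteq> 0} \<subseteq> {c. x c \<noteq> 0} \<union> {c. y c \<noteq> 0}" by auto
  then show ?thesis using assms by (auto simp: is_vec_def intro: finite_subset)
qed

lemma is_vec_diff:
  assumes "is_vec Bs x" "is_vec Bs y" shows "is_vec Bs (\<lambda>c. x c - (y c :: 'k::field))"
proof -
  have "{c. x c - y c \<noteq> 0} \<subseteq> {c. x c \<noteq> 0} \<union> {c. y c \<noteq> 0}" by auto
  then show ?thesis using assms by (auto simp: is_vec_def intro: finite_subset)
qed

lemma is_vec_plus: "is_vec Bs x \<Longrightarrow> is_vec Bs y \<Longrightarrow> is_vec Bs (x + (y :: 'b \<Rightarrow> 'k::field))"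
  using is_vec_add[of Bs x y] by (simp add: plus_fun_def)

lemma is_vec_av:
  fixes A :: "('b,'k::field) opr"
  assumes "\<And>w. is_vec Bs (A w)" "is_vec Bs y"
  shows "is_vec Bs (apply_vec A y w)"
proof -
  have "is_vec Bs (\<lambda>c. \<Sum>b\<in>supp y. y b * A (b # w) c)"
    by (rule is_vec_sum) (use assms is_vec_fin in auto)
  then show ?thesis by (simp add: apply_vec_def supp_def)
qed

lemma comp_vec:
  fixes A B :: "('b,'k::field) opr"
  assumes "\<And>w. is_vec Bs (A w)" "\<And>w. is_vec Bs (B w)"
  shows "is_vec Bs (comp A B w)"
  using assms
proof (induction w arbitrary: A B)
  case Nil then show ?case by (simp add: is_vec_av)
next
  case (Cons b w)
  have 1: "is_vec Bs (apply_vec A (B []) (b # w))" by (rule is_vec_av) (use Cons.prems in auto)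
  have 2: "is_vec Bs (comp A (ev_letter B b) w)"
    by (rule Cons.IH) (use Cons.prems in \<open>auto simp: ev_letter_def\<close>)
  have 3: "is_vec Bs (comp (ev_letter A b) (strip B) w)"
    by (rule Cons.IH) (use Cons.prems in \<open>auto simp: ev_letter_def strip_def\<close>)
  show ?case using is_vec_add[OF is_vec_add[OF 1 2] 3] by (simp add: plus_fun_def)
qed

lemma comp_outside:
  fixes A B :: "('b,'k::field) opr"
  assumes "\<And>w. \<not> set w \<subseteq> Bs \<Longrightarrow> A w = 0" "\<And>w. \<not> set w \<subseteq> Bs \<Longrightarrow> B w = 0"
    and "\<not> set w \<subseteq> Bs"
  shows "comp A B w = 0"
  using assms
proof (induction w arbitrary: A B)
  case Nil then show ?case by simp
next
  case (Cons b w)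
  have 1: "apply_vec A (B []) (b # w) = 0"
    using Cons.prems(1)[of "_ # b # w"] Cons.prems(3) by (auto simp: apply_vec_def fun_eq_iff)
  show ?case
  proof (cases "b \<in> Bs")
    case True
    then have w: "\<not> set w \<subseteq> Bs" using Cons.prems(3) by auto
    have 2: "comp A (ev_letter B b) w = 0"
      by (rule Cons.IH[OF _ _ w]) (use Cons.prems in \<open>auto simp: ev_letter_def\<close>)
    have 3: "comp (ev_letter A b) (strip B) w = 0"
      by (rule Cons.IH[OF _ _ w]) (use Cons.prems in \<open>auto simp: ev_letter_def strip_def\<close>)
    show ?thesis using 1 2 3 by simp
  next
    case False
    have eB: "ev_letter B b = (\<lambda>w c. 0)" using Cons.prems(2) False by (auto simp: ev_letter_def fun_eq_iff)
    have eA: "ev_letter A b = (\<lambda>w c. 0)" using Cons.prems(1) False by (auto simp: ev_letter_def fun_eq_iff)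
    show ?thesis using 1 by (simp add: eA eB comp_zero1 comp_zero2)
  qed
qed

lemma av_nonzero: "apply_vec A y w \<noteq> 0 \<Longrightarrow> \<exists>b. A (b # w) \<noteq> 0"
proof (rule ccontr)
  assume "apply_vec A y w \<noteq> 0" "\<not> (\<exists>b. A (b # w) \<noteq> 0)"
  then show False by (simp add: apply_vec_def fun_eq_iff)
qed

lemma bounded_ev: "bounded B m \<Longrightarrow> bounded (ev_letter B b) (m - 1)"
  unfolding bounded_def ev_letter_def
proof (intro allI impI)
  fix w assume "\<forall>w. B w \<noteq> 0 \<longrightarrow> length w \<le> m" "B (b # w) \<noteq> 0"
  then have "length (b # w) \<le> m" by blast
  then show "length w \<le> m - 1" by simp
qed

lemma comp_bounded:
  "bounded A n \<Longrightarrow> bounded B m \<Longrightarrow> comp A B w \<noteq> 0 \<Longrightarrow> length w \<le> n + m"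
proof (induction w arbitrary: A B n m)
  case Nil then show ?case by simp
next
  case (Cons b w)
  have "apply_vec A (B []) (b # w) \<noteq> 0 \<or> comp A (ev_letter B b) w \<noteq> 0 \<or> comp (ev_letter A b) (strip B) w \<noteq> 0"
  proof (rule ccontr)
    assume "\<not> (apply_vec A (B []) (b # w) \<noteq> 0 \<or> comp A (ev_letter B b) w \<noteq> 0 \<or> comp (ev_letter A b) (strip B) w \<noteq> 0)"
    then have "comp A B (b # w) = 0" by simp
    with Cons.prems(3) show False by blast
  qed
  then consider (t1) "apply_vec A (B []) (b # w) \<noteq> 0" | (t2) "comp A (ev_letter B b) w \<noteq> 0"
    | (t3) "comp (ev_letter A b) (strip B) w \<noteq> 0" by blast
  then show ?case
  proof cases
    case t1
    then obtain b' where "A (b' # b # w) \<noteq> 0" using av_nonzero by blast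
    then show ?thesis using Cons.prems(1) by (auto simp: bounded_def dest!: spec[of _ "b' # b # w"])
  next
    case t2
    have "ev_letter B b \<noteq> (\<lambda>w c. 0)"
    proof
      assume "ev_letter B b = (\<lambda>w c. 0)"
      then have "comp A (ev_letter B b) w = 0" by (simp only: comp_zero2)
      with t2 show False by blast
    qed
    then obtain v where v: "B (b # v) \<noteq> 0" by (auto simp: ev_letter_def fun_eq_iff)
    then have m: "m \<ge> 1" using Cons.prems(2) by (auto simp: bounded_def dest!: spec[of _ "b # v"])
    have "bounded (ev_letter B b) (m - 1)" using Cons.prems(2) by (rule bounded_ev)
    then have "length w \<le> n + (m - 1)" using Cons.IH[OF Cons.prems(1) _ t2] by blast
    then show ?thesis using m by simp
  next
    case t3
    have "ev_letter A b \<noteq> (\<lambda>w c. 0)"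
    proof
      assume "ev_letter A b = (\<lambda>w c. 0)"
      then have "comp (ev_letter A b) (strip B) w = 0" by (simp only: comp_zero1)
      with t3 show False by blast
    qed
    then obtain v where v: "A (b # v) \<noteq> 0" by (auto simp: ev_letter_def fun_eq_iff)
    then have n: "n \<ge> 1" using Cons.prems(1) by (auto simp: bounded_def dest!: spec[of _ "b # v"])
    have bA: "bounded (ev_letter A b) (n - 1)" using Cons.prems(1) by (rule bounded_ev)
    have bB: "bounded (strip B) m" using Cons.prems(2) by (auto simp: bounded_def strip_def)
    have "length w \<le> (n - 1) + m" using Cons.IH[OF bA bB t3] .
    then show ?thesis using n by simp
  qed
qed

lemma is_op_br_ops:
  fixes A B :: "('b,'k::field) opr"
  assumes A: "is_op Bs A" and B: "is_op Bs B"
  shows "is_op Bs (br_ops A B)"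
proof -
  obtain n where n: "bounded A n" using is_op_bounded[OF A] by blast
  obtain m where m: "bounded B m" using is_op_bounded[OF B] by blast
  have bd: "bounded (br_ops A B) (n + m)"
    unfolding bounded_def
  proof (intro allI impI)
    fix w assume "br_ops A B w \<noteq> 0"
    then have "comp A B w \<noteq> 0 \<or> comp B A w \<noteq> 0" by (auto simp: br_ops_def)
    then show "length w \<le> n + m" using comp_bounded[OF n m, of w] comp_bounded[OF m n, of w] by auto
  qed
  have AV: "\<And>w. is_vec Bs (A w)" and BV: "\<And>w. is_vec Bs (B w)" using A B by (auto simp: is_op_def)
  have AZ: "\<And>w. \<not> set w \<subseteq> Bs \<Longrightarrow> A w = 0" and BZ: "\<And>w. \<not> set w \<subseteq> Bs \<Longrightarrow> B w = 0"
    using A B by (auto simp: is_op_def)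
  have V: "is_vec Bs (br_ops A B w)" for w
  proof -
    have "is_vec Bs (\<lambda>c. comp A B w c - comp B A w c)"
      by (rule is_vec_diff) (use comp_vec[OF AV BV] comp_vec[OF BV AV] in auto)
    then show ?thesis by (simp add: br_ops_def fun_diff_def)
  qed
  have Z: "br_ops A B w = 0" if "\<not> set w \<subseteq> Bs" for w
    using comp_outside[OF AZ BZ that] comp_outside[OF BZ AZ that] by (simp add: br_ops_def)
  have N: "br_ops A B [] = 0"
    using comp_Nil_zero[where B=A and A=B, OF is_op_Nil[OF A]] comp_Nil_zero[where B=B and A=A, OF is_op_Nil[OF B]]
    by (simp add: br_ops_def)
  show ?thesis unfolding is_op_def using V Z N bounded_finite[OF bd] by blast
qed

lemma av_as_sum: "apply_vec B x = (\<lambda>v c. \<Sum>b\<in>supp x. x b * ev_letter B b v c)"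
  by (simp add: apply_vec_def ev_letter_def supp_def)

lemma KEY:
  fixes A B :: "('b,'k::field) opr"
  assumes A: "is_op Bs A" and B: "is_op Bs B" and x: "is_vec Bs x"
  shows "apply_vec (br_ops A B) x w c =
    br_ops A (strip (apply_vec B x)) w c - br_ops B (strip (apply_vec A x)) w c
    + apply_vec A (apply_vec B x []) w c - apply_vec B (apply_vec A x []) w c"
proof -
  have fx: "fin x" using x is_vec_fin by blast
  have A0: "A [] = 0" and B0: "B [] = 0" using A B is_op_Nil by auto
  have vA: "vfin A" and vB: "vfin B" using A B is_op_vfin by auto
  have s1: "(\<Sum>b\<in>supp x. x b * comp A (ev_letter B b) w c) = comp A (apply_vec B x) w c"
    unfolding av_as_sum by (rule comp_sum2[symmetric]) (use fx vfin_ev[OF vB] in auto)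
  have s2: "(\<Sum>b\<in>supp x. x b * comp B (ev_letter A b) w c) = comp B (apply_vec A x) w c"
    unfolding av_as_sum by (rule comp_sum2[symmetric]) (use fx vfin_ev[OF vA] in auto)
  have s3: "(\<Sum>b\<in>supp x. x b * comp (ev_letter A b) B w c) = comp (apply_vec A x) B w c"
    unfolding av_as_sum by (rule comp_sum1[symmetric])
  have s4: "(\<Sum>b\<in>supp x. x b * comp (ev_letter B b) A w c) = comp (apply_vec B x) A w c"
    unfolding av_as_sum by (rule comp_sum1[symmetric])
  have cA: "\<And>b. comp A B (b # w) = comp A (ev_letter B b) w + comp (ev_letter A b) B w"
    by (rule comp_Cons_pure[where B=B and A=A, OF B0])
  have cB: "\<And>b. comp B A (b # w) = comp B (ev_letter A b) w + comp (ev_letter B b) A w"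
    by (rule comp_Cons_pure[where B=A and A=B, OF A0])
  have "apply_vec (br_ops A B) x w c = (\<Sum>b\<in>supp x. x b * (comp A B (b # w) c - comp B A (b # w) c))"
    by (simp add: apply_vec_def br_ops_def supp_def)
  also have "\<dots> = (\<Sum>b\<in>supp x. x b * comp A (ev_letter B b) w c + x b * comp (ev_letter A b) B w c
       - (x b * comp B (ev_letter A b) w c + x b * comp (ev_letter B b) A w c))"
    by (rule sum.cong[OF refl], simp only: cA cB plus_fun_apply, simp add: algebra_simps)
  also have "\<dots> = (\<Sum>b\<in>supp x. x b * comp A (ev_letter B b) w c) + (\<Sum>b\<in>supp x. x b * comp (ev_letter A b) B w c)
       - ((\<Sum>b\<in>supp x. x b * comp B (ev_letter A b) w c) + (\<Sum>b\<in>supp x. x b * comp (ev_letter B b) A w c))"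
    by (simp only: sum.distrib sum_subtractf)
  also have "\<dots> = comp A (apply_vec B x) w c + comp (apply_vec A x) B w c - (comp B (apply_vec A x) w c
      + comp (apply_vec B x) A w c)"
    by (simp only: s1 s2 s3 s4)
  also have "\<dots> = br_ops A (strip (apply_vec B x)) w c - br_ops B (strip (apply_vec A x)) w c
    + apply_vec A (apply_vec B x []) w c - apply_vec B (apply_vec A x []) w c"
  proof -
    have e1: "comp A (apply_vec B x) w = comp A (strip (apply_vec B x)) w + apply_vec A (apply_vec B x []) w"
      by (rule comp_split2)
    have e2: "comp B (apply_vec A x) w = comp B (strip (apply_vec A x)) w + apply_vec B (apply_vec A x []) w"
      by (rule comp_split2)
    have e3: "comp (apply_vec A x) B w = comp (strip (apply_vec A x)) B w" by (rule comp_strip1[symmetric])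
    have e4: "comp (apply_vec B x) A w = comp (strip (apply_vec B x)) A w" by (rule comp_strip1[symmetric])
    show ?thesis by (simp only: e1 e2 e3 e4 plus_fun_apply br_ops_def minus_apply) (simp add: algebra_simps)
  qed
  finally show ?thesis .
qed


locale brk =
  fixes V :: "'a::ab_group_add set" and br :: "'a \<Rightarrow> 'a \<Rightarrow> 'a"
  assumes zero: "0 \<in> V" and addc: "x \<in> V \<Longrightarrow> y \<in> V \<Longrightarrow> x + y \<in> V"
    and negc: "x \<in> V \<Longrightarrow> - x \<in> V"
    and brc: "x \<in> V \<Longrightarrow> y \<in> V \<Longrightarrow> br x y \<in> V"
    and addl: "x \<in> V \<Longrightarrow> y \<in> V \<Longrightarrow> z \<in> V \<Longrightarrow> br (x + y) z = br x z + br y z"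
    and addr: "x \<in> V \<Longrightarrow> y \<in> V \<Longrightarrow> z \<in> V \<Longrightarrow> br z (x + y) = br z x + br z y"
    and alt: "x \<in> V \<Longrightarrow> br x x = 0"
begin

definition J :: "'a \<Rightarrow> 'a \<Rightarrow> 'a \<Rightarrow> 'a" where
  "J x y z = br x (br y z) + br y (br z x) + br z (br x y)"

lemma diffc: "x \<in> V \<Longrightarrow> y \<in> V \<Longrightarrow> x - y \<in> V"
  using addc[OF _ negc, of x y] by simp

lemma br0l: "z \<in> V \<Longrightarrow> br 0 z = 0"
  using addl[OF zero zero, of z] by simp
lemma br0r: "z \<in> V \<Longrightarrow> br z 0 = 0"
  using addr[OF zero zero, of z] by simp
lemma negl: "x \<in> V \<Longrightarrow> z \<in> V \<Longrightarrow> br (- x) z = - br x z"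
  using addl[OF _ negc, of x x z] br0l[of z] by (simp add: eq_neg_iff_add_eq_0 add.commute)
lemma negr: "x \<in> V \<Longrightarrow> z \<in> V \<Longrightarrow> br z (- x) = - br z x"
  using addr[OF _ negc, of x x z] br0r[of z] by (simp add: eq_neg_iff_add_eq_0 add.commute)
lemma diffl: "x \<in> V \<Longrightarrow> y \<in> V \<Longrightarrow> z \<in> V \<Longrightarrow> br (x - y) z = br x z - br y z"
  using addl[OF _ negc, of x y z] negl[of y z] by simp
lemma diffr: "x \<in> V \<Longrightarrow> y \<in> V \<Longrightarrow> z \<in> V \<Longrightarrow> br z (x - y) = br z x - br z y"
  using addr[OF _ negc, of x y z] negr[of y z] by simp

lemma antisym: "x \<in> V \<Longrightarrow> y \<in> V \<Longrightarrow> br x y = - br y x"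
proof -
  assume x: "x \<in> V" and y: "y \<in> V"
  have "0 = br (x + y) (x + y)" using alt[OF addc[OF x y]] by simp
  also have "\<dots> = br x x + br x y + (br y x + br y y)"
    using addl[OF x y addc[OF x y]] addr[OF x y x] addr[OF x y y] by simp
  also have "\<dots> = br x y + br y x" using alt[OF x] alt[OF y] by simp
  finally show ?thesis by (simp add: eq_neg_iff_add_eq_0)
qed

lemma J_cyc: "J x y z = J y z x"
  by (simp add: J_def add_ac)

lemma J_swap: "x \<in> V \<Longrightarrow> y \<in> V \<Longrightarrow> z \<in> V \<Longrightarrow> J y x z = - J x y z"
proof -
  assume x: "x \<in> V" and y: "y \<in> V" and z: "z \<in> V"
  have "J y x z = br y (br x z) + br x (br z y) + br z (br y x)" by (simp add: J_def)
  also have "\<dots> = - br y (br z x) - br x (br y z) - br z (br x y)"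
    using antisym[OF x z] antisym[OF z y] antisym[OF y x] negr[OF brc[OF z x] y] negr[OF brc[OF y z] x]
      negr[OF brc[OF x y] z] by simp
  also have "\<dots> = - J x y z" by (simp add: J_def)
  finally show ?thesis .
qed

lemma J_D: "x \<in> V \<Longrightarrow> y \<in> V \<Longrightarrow> z \<in> V \<Longrightarrow> J x y z = br x (br y z) - br (br x y) z - br y (br x z)"
proof -
  assume x: "x \<in> V" and y: "y \<in> V" and z: "z \<in> V"
  have "br y (br z x) = - br y (br x z)" using antisym[OF z x] negr[OF brc[OF x z] y] by simp
  moreover have "br z (br x y) = - br (br x y) z" using antisym[OF z brc[OF x y]] .
  ultimately show ?thesis by (simp add: J_def)
qed

lemma J_add1: "x1 \<in> V \<Longrightarrow> x2 \<in> V \<Longrightarrow> y \<in> V \<Longrightarrow> z \<in> V \<Longrightarrow> J (x1 + x2) y z = J x1 y z + J x2 y z"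
  unfolding J_def
  by (simp add: addl addr brc add_ac)

lemma J_add2: "x \<in> V \<Longrightarrow> y1 \<in> V \<Longrightarrow> y2 \<in> V \<Longrightarrow> z \<in> V \<Longrightarrow> J x (y1 + y2) z = J x y1 z + J x y2 z"
proof -
  assume a: "x \<in> V" "y1 \<in> V" "y2 \<in> V" "z \<in> V"
  have "J x (y1 + y2) z = J (y1 + y2) z x" by (rule J_cyc)
  also have "\<dots> = J y1 z x + J y2 z x" by (rule J_add1) (use a in auto)
  also have "\<dots> = J x y1 z + J x y2 z" by (simp only: J_cyc[of x y1 z] J_cyc[of x y2 z])
  finally show ?thesis .
qed

lemma J_add3: "x \<in> V \<Longrightarrow> y \<in> V \<Longrightarrow> z1 \<in> V \<Longrightarrow> z2 \<in> V \<Longrightarrow> J x y (z1 + z2) = J x y z1 + J x y z2"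
proof -
  assume a: "x \<in> V" "y \<in> V" "z1 \<in> V" "z2 \<in> V"
  have c: "J x y z = J z x y" for z using J_cyc[of x y z] J_cyc[of y z x] by simp
  have "J x y (z1 + z2) = J (z1 + z2) x y" by (rule c)
  also have "\<dots> = J z1 x y + J z2 x y" by (rule J_add1) (use a in auto)
  also have "\<dots> = J x y z1 + J x y z2" by (simp only: c[of z1] c[of z2])
  finally show ?thesis .
qed

lemma J_zero3: "x \<in> V \<Longrightarrow> y \<in> V \<Longrightarrow> J x y 0 = 0"
  by (simp add: J_def br0l br0r brc)

lemma J_decomp:
  assumes OV: "Os \<subseteq> V" and LV: "Ls \<subseteq> V"
    and dec: "\<And>x. x \<in> V \<Longrightarrow> \<exists>ob\<in>Os. \<exists>l\<in>Ls. x = ob + l"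
    and ooo: "\<And>a b c. a \<in> Os \<Longrightarrow> b \<in> Os \<Longrightarrow> c \<in> Os \<Longrightarrow> J a b c = 0"
    and ool: "\<And>a b c. a \<in> Os \<Longrightarrow> b \<in> Os \<Longrightarrow> c \<in> Ls \<Longrightarrow> J a b c = 0"
    and oll: "\<And>a b c. a \<in> Os \<Longrightarrow> b \<in> Ls \<Longrightarrow> c \<in> Ls \<Longrightarrow> J a b c = 0"
    and lll: "\<And>a b c. a \<in> Ls \<Longrightarrow> b \<in> Ls \<Longrightarrow> c \<in> Ls \<Longrightarrow> J a b c = 0"
    and x: "x \<in> V" and y: "y \<in> V" and z: "z \<in> V"
  shows "J x y z = 0"
proof -
  obtain o1 l1 where 1: "o1 \<in> Os" "l1 \<in> Ls" "x = o1 + l1" using dec[OF x] by blast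
  obtain o2 l2 where 2: "o2 \<in> Os" "l2 \<in> Ls" "y = o2 + l2" using dec[OF y] by blast
  obtain o3 l3 where 3: "o3 \<in> Os" "l3 \<in> Ls" "z = o3 + l3" using dec[OF z] by blast
  have V: "o1 \<in> V" "l1 \<in> V" "o2 \<in> V" "l2 \<in> V" "o3 \<in> V" "l3 \<in> V" using 1 2 3 OV LV by auto
  have olo: "J a b c = 0" if "a \<in> Os" "b \<in> Ls" "c \<in> Os" for a b c
    using ool[OF that(3) that(1) that(2)] J_cyc[of c a b] by simp
  have loo: "J a b c = 0" if "a \<in> Ls" "b \<in> Os" "c \<in> Os" for a b c
    using ool[OF that(2) that(3) that(1)] J_cyc[of a b c] by simp
  have lol: "J a b c = 0" if "a \<in> Ls" "b \<in> Os" "c \<in> Ls" for a b c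
    using oll[OF that(2) that(3) that(1)] J_cyc[of a b c] by simp
  have llo: "J a b c = 0" if "a \<in> Ls" "b \<in> Ls" "c \<in> Os" for a b c
    using oll[OF that(3) that(1) that(2)] J_cyc[of c a b] by simp
  show ?thesis
    unfolding 1(3) 2(3) 3(3)
    using V 1 2 3
    by (simp add: J_add1 J_add2 J_add3 addc ooo ool oll lll olo loo lol llo)
qed

lemma J_brk_step:
  assumes OV: "Os \<subseteq> V" and LV: "Ls \<subseteq> V"
    and dec: "\<And>x. x \<in> V \<Longrightarrow> \<exists>ob\<in>Os. \<exists>l\<in>Ls. x = ob + l"
    and Obr: "\<And>a b. a \<in> Os \<Longrightarrow> b \<in> Os \<Longrightarrow> br a b \<in> Os"
    and oll: "\<And>a b c. a \<in> Os \<Longrightarrow> b \<in> Ls \<Longrightarrow> c \<in> Ls \<Longrightarrow> J a b c = 0"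
    and A: "A \<in> Os" and B: "B \<in> Os" and v: "v \<in> Ls" and w: "w \<in> Ls"
    and IHv: "\<And>a b. a \<in> Os \<Longrightarrow> b \<in> Os \<Longrightarrow> J a b v = 0"
    and IHw: "\<And>a b. a \<in> Os \<Longrightarrow> b \<in> Os \<Longrightarrow> J a b w = 0"
  shows "J A B (br v w) = 0"
proof -
  have AV: "A \<in> V" and BV: "B \<in> V" and vV: "v \<in> V" and wV: "w \<in> V" using A B v w OV LV by auto
  have Jx2: "J a x u = 0" if a: "a \<in> Os" and x: "x \<in> V" and u: "u \<in> {v, w}" for a x u
  proof -
    obtain ob l where ol: "ob \<in> Os" "l \<in> Ls" "x = ob + l" using dec[OF x] by blast
    have "J a ob u = 0" using IHv[OF a ol(1)] IHw[OF a ol(1)] u by auto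
    moreover have "J a l u = 0" using oll[OF a ol(2)] u v w by auto
    moreover have "J a (ob + l) u = J a ob u + J a l u"
      by (rule J_add2) (use ol OV LV a u vV wV in auto)
    ultimately show ?thesis using ol(3) by simp
  qed
  have Jx3: "J a u x = 0" if a: "a \<in> Os" and x: "x \<in> V" and u: "u \<in> {v, w}" for a x u
  proof -
    have uV: "u \<in> V" using u vV wV by auto
    have "J a u x = J x a u" using J_cyc[of a u x] J_cyc[of u x a] by simp
    also have "\<dots> = - J a x u" using J_swap[OF OV[THEN subsetD, OF a] x uV] by simp
    finally show ?thesis using Jx2[OF a x u] by simp
  qed
  note D = J_D
  have "br A (br B (br v w)) - br (br A B) (br v w) - br B (br A (br v w)) = 0"
  proof -
    have bv: "br B v \<in> V" "br A v \<in> V" "br B w \<in> V" "br A w \<in> V" using AV BV vV wV brc by auto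
    have BVW: "br B (br v w) = br (br B v) w + br v (br B w)"
      using D[OF BV vV wV] oll[OF B v w] by (simp add: algebra_simps)
    have AVW: "br A (br v w) = br (br A v) w + br v (br A w)"
      using D[OF AV vV wV] oll[OF A v w] by (simp add: algebra_simps)
    have ABVW: "br (br A B) (br v w) = br (br (br A B) v) w + br v (br (br A B) w)"
      using D[OF brc[OF AV BV] vV wV] oll[OF Obr[OF A B] v w] by (simp add: algebra_simps)
    have t1: "br A (br (br B v) w) = br (br A (br B v)) w + br (br B v) (br A w)"
      using D[OF AV bv(1) wV] Jx2[OF A bv(1), of w] by (simp add: algebra_simps)
    have t2: "br A (br v (br B w)) = br (br A v) (br B w) + br v (br A (br B w))"
      using D[OF AV vV bv(3)] Jx3[OF A bv(3), of v] by (simp add: algebra_simps)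
    have t3: "br B (br (br A v) w) = br (br B (br A v)) w + br (br A v) (br B w)"
      using D[OF BV bv(2) wV] Jx2[OF B bv(2), of w] by (simp add: algebra_simps)
    have t4: "br B (br v (br A w)) = br (br B v) (br A w) + br v (br B (br A w))"
      using D[OF BV vV bv(4)] Jx3[OF B bv(4), of v] by (simp add: algebra_simps)
    have iv: "br A (br B v) - br B (br A v) = br (br A B) v"
      using D[OF AV BV vV] IHv[OF A B] by (simp add: algebra_simps)
    have iw: "br A (br B w) - br B (br A w) = br (br A B) w"
      using D[OF AV BV wV] IHw[OF A B] by (simp add: algebra_simps)
    have c1: "br A (br B v) \<in> V" "br B (br A v) \<in> V" "br A (br B w) \<in> V" "br B (br A w) \<in> V"
      using AV BV bv brc by auto
    have "br A (br B (br v w)) - br B (br A (br v w))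
       = br (br A (br B v)) w - br (br B (br A v)) w + (br v (br A (br B w)) - br v (br B (br A w)))"
      unfolding BVW AVW
      using addr[OF brc[OF bv(1) wV] brc[OF vV bv(3)] AV] addr[OF brc[OF bv(2) wV] brc[OF vV bv(4)] BV]
      by (simp add: t1 t2 t3 t4 algebra_simps)
    also have "\<dots> = br (br A (br B v) - br B (br A v)) w + br v (br A (br B w) - br B (br A w))"
      using diffl[OF c1(1) c1(2) wV] diffr[OF c1(3) c1(4) vV] by simp
    also have "\<dots> = br (br A B) (br v w)" unfolding iv iw ABVW ..
    finally show ?thesis by (simp add: algebra_simps)
  qed
  then show ?thesis using D[OF AV BV brc[OF vV wV]] by simp
qed

lemma J_ad:
  assumes OV: "Os \<subseteq> V" and Obr: "\<And>a b. a \<in> Os \<Longrightarrow> b \<in> Os \<Longrightarrow> br a b \<in> Os"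
    and x: "x \<in> V" and Jx: "\<And>p q. p \<in> Os \<Longrightarrow> q \<in> Os \<Longrightarrow> J p q x = 0"
    and A: "A \<in> Os" and B: "B \<in> Os" and C: "C \<in> Os"
  shows "br (J A B C) x = J A B (br C x) + J A (br B x) C + J (br A x) B C"
proof -
  have AV: "A \<in> V" and BV: "B \<in> V" and CV: "C \<in> V" using A B C OV by auto
  have der: "br (br p q) x = br p (br q x) + br (br p x) q" if "p \<in> Os" "q \<in> Os" for p q
  proof -
    have pV: "p \<in> V" and qV: "q \<in> V" using that OV by auto
    have "br p (br q x) - br (br p q) x - br q (br p x) = 0" using J_D[OF pV qV x] Jx[OF that] by simp
    moreover have "br q (br p x) = - br (br p x) q" using antisym[OF qV brc[OF pV x]] .
    ultimately show ?thesis by (simp add: algebra_simps)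
  qed
  have V1: "br B C \<in> V" "br C A \<in> V" "br A B \<in> V" using AV BV CV brc by auto
  have O1: "br B C \<in> Os" "br C A \<in> Os" "br A B \<in> Os" using A B C Obr by auto
  have X: "br A x \<in> V" "br B x \<in> V" "br C x \<in> V" using AV BV CV x brc by auto
  have W: "br A (br B C) \<in> V" "br B (br C A) \<in> V" "br C (br A B) \<in> V"
    using AV BV CV V1 brc by auto
  have "br (J A B C) x = br (br A (br B C)) x + br (br B (br C A)) x + br (br C (br A B)) x"
    unfolding J_def using addl[OF addc[OF W(1) W(2)] W(3) x] addl[OF W(1) W(2) x] by simp
  also have "\<dots> = (br A (br B (br C x)) + br A (br (br B x) C) + br (br A x) (br B C))
     + (br B (br C (br A x)) + br B (br (br C x) A) + br (br B x) (br C A))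
     + (br C (br A (br B x)) + br C (br (br A x) B) + br (br C x) (br A B))"
    using der[OF A O1(1)] der[OF B O1(2)] der[OF C O1(3)] der[OF B C] der[OF C A] der[OF A B]
      addr[OF brc[OF BV X(3)] brc[OF X(2) CV] AV] addr[OF brc[OF CV X(1)] brc[OF X(3) AV] BV]
      addr[OF brc[OF AV X(2)] brc[OF X(1) BV] CV]
    by simp
  also have "\<dots> = J A B (br C x) + J A (br B x) C + J (br A x) B C"
    unfolding J_def by (simp add: add_ac)
  finally show ?thesis .
qed

end


lemma is_op_zero: "is_op Bs (0 :: ('b,'k::field) opr)"
  by (simp add: is_op_def is_vec_def)

lemma is_op_lin:
  fixes A A' :: "('b,'k::field) opr"
  assumes A: "is_op Bs A" and A': "is_op Bs A'"
  shows "is_op Bs (\<lambda>w c. k1 * A w c + k2 * A' w c)"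
proof -
  obtain n where n: "bounded A n" using is_op_bounded[OF A] by blast
  obtain m where m: "bounded A' m" using is_op_bounded[OF A'] by blast
  have bd: "bounded (\<lambda>w c. k1 * A w c + k2 * A' w c) (n + m)"
    unfolding bounded_def
  proof (intro allI impI)
    fix w assume nz: "(\<lambda>c. k1 * A w c + k2 * A' w c) \<noteq> 0"
    have "A w \<noteq> 0 \<or> A' w \<noteq> 0"
    proof (rule ccontr)
      assume "\<not> (A w \<noteq> 0 \<or> A' w \<noteq> 0)"
      then have "(\<lambda>c. k1 * A w c + k2 * A' w c) = 0" by (simp add: fun_eq_iff)
      with nz show False by blast
    qed
    then show "length w \<le> n + m" using n m unfolding bounded_def by force
  qed
  have V: "is_vec Bs (\<lambda>c. k1 * A w c + k2 * A' w c)" for w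
  proof -
    have 1: "is_vec Bs (\<lambda>c. k1 * A w c)" using A
      by (auto simp: is_op_def is_vec_def intro: finite_subset[of _ "{c. A w c \<noteq> 0}"])
    have 2: "is_vec Bs (\<lambda>c. k2 * A' w c)" using A'
      by (auto simp: is_op_def is_vec_def intro: finite_subset[of _ "{c. A' w c \<noteq> 0}"])
    show ?thesis using is_vec_add[OF 1 2] .
  qed
  show ?thesis unfolding is_op_def
    using V bounded_finite[OF bd] A A' by (auto simp: is_op_def)
qed

lemma lam_add: "(A + A') = (\<lambda>w c. 1 * A w c + 1 * (A' w c :: 'k::field))"
  by (simp add: fun_eq_iff)
lemma lam_smult: "(\<lambda>w c. k * A w c) = (\<lambda>w c. k * A w c + 0 * (A w c :: 'k::field))"
  by (simp add: fun_eq_iff)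
lemma lam_neg: "- A = (\<lambda>w c. (-1) * A w c + 0 * (A w c :: 'k::field))"
  by (simp add: fun_eq_iff)

lemma is_op_add: "is_op Bs A \<Longrightarrow> is_op Bs A' \<Longrightarrow> is_op Bs (A + (A' :: ('b,'k::field) opr))"
  by (subst lam_add) (rule is_op_lin)
lemma is_op_smult: "is_op Bs A \<Longrightarrow> is_op Bs (\<lambda>w c. k * (A :: ('b,'k::field) opr) w c)"
  by (subst lam_smult) (rule is_op_lin)
lemma is_op_neg: "is_op Bs A \<Longrightarrow> is_op Bs (- (A :: ('b,'k::field) opr))"
  by (subst lam_neg) (rule is_op_lin)

lemma br_ops_lin1:
  fixes A1 A2 C :: "('b,'k::field) opr"
  assumes "vfin A1" "vfin A2"
  shows "br_ops (\<lambda>w c. k1 * A1 w c + k2 * A2 w c) C = (\<lambda>w c. k1 * br_ops A1 C w c + k2 * br_ops A2 C w c)"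
  by (simp add: br_ops_def fun_eq_iff comp_lin1 comp_lin2[OF assms] algebra_simps)

lemma br_ops_lin2:
  fixes A1 A2 C :: "('b,'k::field) opr"
  assumes "vfin A1" "vfin A2"
  shows "br_ops C (\<lambda>w c. k1 * A1 w c + k2 * A2 w c) = (\<lambda>w c. k1 * br_ops C A1 w c + k2 * br_ops C A2 w c)"
  by (simp add: br_ops_def fun_eq_iff comp_lin1 comp_lin2[OF assms] algebra_simps)

lemma br_ops_self: "br_ops A A = 0"
  by (simp add: br_ops_def fun_eq_iff)


lemma tbr_add1: "tbr (u1 + u2) c = tbr u1 c + tbr u2 c"
  by (simp add: tbr_def tmul_add1 tmul_add2 algebra_simps)
lemma tbr_add2: "tbr c (u1 + u2) = tbr c u1 + tbr c u2"
  by (simp add: tbr_def tmul_add1 tmul_add2 algebra_simps)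
lemma tbr_smult1: "tbr (\<lambda>w. k * u w) c = (\<lambda>w. k * tbr u c w)"
  by (simp add: tbr_def tmul_smult1 tmul_smult2 fun_eq_iff algebra_simps)
lemma tbr_smult2: "tbr c (\<lambda>w. k * u w) = (\<lambda>w. k * tbr c u w)"
  by (simp add: tbr_def tmul_smult1 tmul_smult2 fun_eq_iff algebra_simps)
lemma tbr_self: "tbr u u = 0"
  by (simp add: tbr_def)
lemma tbr_zero: "tbr 0 u = 0" "tbr u 0 = 0"
  by (simp_all add: tbr_def)

lemma zero_opr: "(\<lambda>w b. 0::'k::zero) = 0" by (simp add: fun_eq_iff)
lemma zero_tens: "(\<lambda>w. 0::'k::zero) = 0" by (simp add: fun_eq_iff)

lemma scaleU_Pair: "scaleU c (A, u) = (\<lambda>w b. c * A w b, \<lambda>w. c * u w)"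
  by (simp add: scaleU_def)
lemma scaleU_add: "scaleU c (x + y) = scaleU c x + scaleU c y"
  by (simp add: scaleU_def fun_eq_iff algebra_simps)
lemma scaleU_diff: "scaleU c (x - y) = scaleU c x - scaleU c y"
  by (simp add: scaleU_def fun_eq_iff algebra_simps)
lemma scaleU_zero: "scaleU c 0 = 0"
  by (simp add: scaleU_def fun_eq_iff zero_prod_def)

locale actctx =
  fixes Bs :: "'b set" and act :: "('b,'k::field) opr \<Rightarrow> ('b,'k) tens \<Rightarrow> ('b,'k) elt"
  assumes ACT: "is_action Bs act"
begin

abbreviation V :: "('b,'k) elt set" where "V \<equiv> Ucar Bs"

lemma ax1: "is_op Bs A \<Longrightarrow> u \<in> lie_poly Bs \<Longrightarrow> act A u \<in> Ucar Bs"
  using ACT by (simp add: is_action_def)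
lemma ax2: "is_op Bs A \<Longrightarrow> is_op Bs A' \<Longrightarrow> u \<in> lie_poly Bs \<Longrightarrow> act (A + A') u = act A u + act A' u"
  using ACT by (simp add: is_action_def)
lemma ax3: "is_op Bs A \<Longrightarrow> u \<in> lie_poly Bs \<Longrightarrow> u' \<in> lie_poly Bs \<Longrightarrow> act A (u + u') = act A u + act A u'"
  using ACT by (simp add: is_action_def)
lemma ax4: "is_op Bs A \<Longrightarrow> u \<in> lie_poly Bs \<Longrightarrow> act (\<lambda>w b. c * A w b) u = scaleU c (act A u)"
  using ACT by (simp add: is_action_def)
lemma ax5: "is_op Bs A \<Longrightarrow> u \<in> lie_poly Bs \<Longrightarrow> act A (\<lambda>w. c * u w) = scaleU c (act A u)"
  using ACT by (simp add: is_action_def)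
lemma ax6: "is_op Bs A \<Longrightarrow> is_vec Bs x \<Longrightarrow> act A (vec_to_tens x) = to_U (apply_vec A x)"
  using ACT by (simp add: is_action_def)
lemma ax7: "is_op Bs A \<Longrightarrow> v \<in> lie_poly Bs \<Longrightarrow> w \<in> lie_poly Bs \<Longrightarrow>
   act A (tbr v w) = brU_with act (act A v) (0, w) - brU_with act (act A w) (0, v)"
  using ACT unfolding is_action_def by blast

lemma Ucar_iff: "(A, u) \<in> V \<longleftrightarrow> is_op Bs A \<and> u \<in> lie_poly Bs"
  by (simp add: Ucar_def)
lemma UcarD: "z \<in> V \<Longrightarrow> is_op Bs (fst z) \<and> snd z \<in> lie_poly Bs"
  by (cases z) (simp add: Ucar_def)

lemma act0: "u \<in> lie_poly Bs \<Longrightarrow> act 0 u = 0"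
  using ax2[OF is_op_zero is_op_zero, of u] by simp
lemma actu0: "is_op Bs A \<Longrightarrow> act A 0 = 0"
  using ax3[OF _ lie_poly_zero lie_poly_zero, of A] by simp

abbreviation br where "br \<equiv> brU_with act"

lemma br_Pair: "br (A, u) (A', u') = (br_ops A A', 0) + act A u' - act A' u + (0, tbr u u')"
  by (simp add: brU_with_def)

lemma V_zero: "0 \<in> V"
  by (simp add: zero_prod_def Ucar_iff is_op_zero lie_poly_zero)
lemma V_add: "x \<in> V \<Longrightarrow> y \<in> V \<Longrightarrow> x + y \<in> V"
  by (cases x; cases y) (simp add: Ucar_iff is_op_add lie_poly.add)
lemma V_neg: "x \<in> V \<Longrightarrow> - x \<in> V"
  by (cases x) (simp add: Ucar_iff is_op_neg lie_poly_neg)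
lemma V_diff: "x \<in> V \<Longrightarrow> y \<in> V \<Longrightarrow> x - y \<in> V"
  using V_add[OF _ V_neg, of x y] by simp
lemma V_sc: "x \<in> V \<Longrightarrow> scaleU c x \<in> V"
  by (cases x) (simp add: Ucar_iff scaleU_Pair is_op_smult lie_poly.smult)

lemma V_br: "x \<in> Ucar Bs \<Longrightarrow> y \<in> Ucar Bs \<Longrightarrow> br x y \<in> Ucar Bs"
proof (cases x; cases y)
  fix A u A' u' assume x: "x \<in> Ucar Bs" "y \<in> Ucar Bs" "x = (A, u)" "y = (A', u')"
  then have h: "is_op Bs A" "u \<in> lie_poly Bs" "is_op Bs A'" "u' \<in> lie_poly Bs" by (auto simp: Ucar_iff)
  have 1: "(br_ops A A', 0) \<in> Ucar Bs" using h by (simp add: Ucar_iff is_op_br_ops lie_poly_zero)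
  have 2: "(0, tbr u u') \<in> Ucar Bs" using h by (simp add: Ucar_iff is_op_zero lie_poly.brk)
  show "br x y \<in> Ucar Bs" unfolding x br_Pair
    by (intro V_add V_diff 1 2 ax1 h)
qed

lemma br_addl:
  assumes x: "x \<in> Ucar Bs" and y: "y \<in> Ucar Bs" and z: "z \<in> Ucar Bs"
  shows "br (x + y) z = br x z + br y z"
proof -
  obtain A1 u1 where 1: "x = (A1, u1)" by (cases x)
  obtain A2 u2 where 2: "y = (A2, u2)" by (cases y)
  obtain C c where 3: "z = (C, c)" by (cases z)
  have h: "is_op Bs A1" "u1 \<in> lie_poly Bs" "is_op Bs A2" "u2 \<in> lie_poly Bs" "is_op Bs C" "c \<in> lie_poly Bs"
    using x y z 1 2 3 by (auto simp: Ucar_iff)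
  have bo: "br_ops (A1 + A2) C = br_ops A1 C + br_ops A2 C"
    by (subst lam_add, subst br_ops_lin1) (use h is_op_vfin in \<open>auto simp: fun_eq_iff\<close>)
  show ?thesis
    unfolding 1 2 3 add_Pair br_Pair
    by (simp add: bo ax2[OF h(1) h(3) h(6)] ax3[OF h(5) h(2) h(4)] tbr_add1 prod_eq_iff algebra_simps)
qed

lemma br_addr:
  assumes x: "x \<in> Ucar Bs" and y: "y \<in> Ucar Bs" and z: "z \<in> Ucar Bs"
  shows "br z (x + y) = br z x + br z y"
proof -
  obtain A1 u1 where 1: "x = (A1, u1)" by (cases x)
  obtain A2 u2 where 2: "y = (A2, u2)" by (cases y)
  obtain C c where 3: "z = (C, c)" by (cases z)
  have h: "is_op Bs A1" "u1 \<in> lie_poly Bs" "is_op Bs A2" "u2 \<in> lie_poly Bs" "is_op Bs C" "c \<in> lie_poly Bs"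
    using x y z 1 2 3 by (auto simp: Ucar_iff)
  have bo: "br_ops C (A1 + A2) = br_ops C A1 + br_ops C A2"
    by (subst lam_add, subst br_ops_lin2) (use h is_op_vfin in \<open>auto simp: fun_eq_iff\<close>)
  show ?thesis
    unfolding 1 2 3 add_Pair br_Pair
    by (simp add: bo ax2[OF h(1) h(3) h(6)] ax3[OF h(5) h(2) h(4)] tbr_add2 prod_eq_iff algebra_simps)
qed

lemma br_alt: "x \<in> Ucar Bs \<Longrightarrow> br x x = 0"
  by (cases x) (simp add: br_Pair br_ops_self tbr_self zero_prod_def)

sublocale B: brk "Ucar Bs" br
  by unfold_locales (auto intro: V_zero V_add V_neg V_br br_addl br_addr br_alt)

lemma br_scl:
  assumes x: "x \<in> Ucar Bs" and z: "z \<in> Ucar Bs"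
  shows "br (scaleU k x) z = scaleU k (br x z)"
proof -
  obtain A1 u1 where 1: "x = (A1, u1)" by (cases x)
  obtain C c where 3: "z = (C, c)" by (cases z)
  have h: "is_op Bs A1" "u1 \<in> lie_poly Bs" "is_op Bs C" "c \<in> lie_poly Bs"
    using x z 1 3 by (auto simp: Ucar_iff)
  have bo: "br_ops (\<lambda>w c. k * A1 w c) C = (\<lambda>w c. k * br_ops A1 C w c)"
    by (subst lam_smult, subst br_ops_lin1) (use h is_op_vfin in \<open>auto simp: fun_eq_iff\<close>)
  show ?thesis
    unfolding 1 3 scaleU_Pair br_Pair
    by (simp add: bo ax4[OF h(1) h(4)] ax5[OF h(3) h(2)] tbr_smult1 scaleU_add scaleU_diff scaleU_Pair zero_opr zero_tens)
qed

lemma br_scr: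
  assumes x: "x \<in> Ucar Bs" and z: "z \<in> Ucar Bs"
  shows "br z (scaleU k x) = scaleU k (br z x)"
proof -
  obtain A1 u1 where 1: "x = (A1, u1)" by (cases x)
  obtain C c where 3: "z = (C, c)" by (cases z)
  have h: "is_op Bs A1" "u1 \<in> lie_poly Bs" "is_op Bs C" "c \<in> lie_poly Bs"
    using x z 1 3 by (auto simp: Ucar_iff)
  have bo: "br_ops C (\<lambda>w c. k * A1 w c) = (\<lambda>w c. k * br_ops C A1 w c)"
    by (subst lam_smult, subst br_ops_lin2) (use h is_op_vfin in \<open>auto simp: fun_eq_iff\<close>)
  show ?thesis
    unfolding 1 3 scaleU_Pair br_Pair
    by (simp add: bo ax4[OF h(1) h(4)] ax5[OF h(3) h(2)] tbr_smult2 scaleU_add scaleU_diff scaleU_Pair zero_opr zero_tens)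
qed

end


context actctx
begin

definition Os :: "('b,'k) elt set" where "Os = {(A, 0) | A. is_op Bs A}"
definition Ls :: "('b,'k) elt set" where "Ls = {(0, u) | u. u \<in> lie_poly Bs}"

lemma Os_V: "Os \<subseteq> V" by (auto simp: Os_def Ucar_iff lie_poly_zero)
lemma Ls_V: "Ls \<subseteq> V" by (auto simp: Ls_def Ucar_iff is_op_zero)
lemma dec: "x \<in> V \<Longrightarrow> \<exists>ob\<in>Os. \<exists>l\<in>Ls. x = ob + l"
  by (cases x) (auto simp: Os_def Ls_def Ucar_iff)

lemma br_oo: "is_op Bs A \<Longrightarrow> is_op Bs B \<Longrightarrow> br (A, 0) (B, 0) = (br_ops A B, 0)"
  by (simp add: br_Pair tbr_zero actu0 zero_prod_def)

lemma br_ol: "is_op Bs A \<Longrightarrow> br (A, 0) (0, u) = act A u"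
  using actu0[OF is_op_zero] by (simp add: br_Pair br_ops_zero2 tbr_zero zero_prod_def)

lemma br_ll: "u \<in> lie_poly Bs \<Longrightarrow> v \<in> lie_poly Bs \<Longrightarrow> br (0, u) (0, v) = (0, tbr u v)"
  by (simp add: br_Pair act0 br_ops_self)

lemma Os_br: "a \<in> Os \<Longrightarrow> b \<in> Os \<Longrightarrow> br a b \<in> Os"
  by (auto simp: Os_def br_oo is_op_br_ops)

lemma lll: "a \<in> Ls \<Longrightarrow> b \<in> Ls \<Longrightarrow> c \<in> Ls \<Longrightarrow> B.J a b c = 0"
  by (auto simp: Ls_def B.J_def br_ll lie_poly.brk tbr_jacobi zero_prod_def)

lemma oll: "a \<in> Os \<Longrightarrow> b \<in> Ls \<Longrightarrow> c \<in> Ls \<Longrightarrow> B.J a b c = 0"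
proof -
  assume "a \<in> Os" "b \<in> Ls" "c \<in> Ls"
  then obtain A v w where A: "is_op Bs A" and v: "v \<in> lie_poly Bs" and w: "w \<in> lie_poly Bs"
    and abc: "a = (A, 0)" "b = (0, v)" "c = (0, w)" by (auto simp: Os_def Ls_def)
  have aV: "a \<in> V" and bV: "b \<in> V" and cV: "c \<in> V" using abc A v w by (auto simp: Ucar_iff lie_poly_zero is_op_zero)
  have av: "act A v \<in> V" and aw: "act A w \<in> V" using ax1 A v w by auto
  have "B.J a b c = br a (br b c) + br b (br c a) + br c (br a b)" by (simp add: B.J_def)
  also have "br c a = - act A w" using B.antisym[OF cV aV] abc br_ol[OF A] by simp
  also have "br b (- act A w) = br (act A w) b" using B.negr[OF aw bV] B.antisym[OF bV aw] by simp
  also have "br c (br a b) = - br (act A v) c" using B.antisym[OF cV av] abc br_ol[OF A] by simp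
  also have "br a (br b c) = act A (tbr v w)" using abc br_ol[OF A] br_ll[OF v w] by simp
  finally show ?thesis using ax7[OF A v w] abc by simp
qed

lemma J_sc3: "a \<in> V \<Longrightarrow> b \<in> V \<Longrightarrow> z \<in> V \<Longrightarrow> B.J a b (scaleU k z) = scaleU k (B.J a b z)"
  by (simp add: B.J_def br_scl br_scr V_br V_sc scaleU_add)

lemma to_U_Pair: "to_U M = (strip M, vec_to_tens (M []))"
  by (simp add: to_U_def)

lemma vtt_add: "vec_to_tens (x + y) = vec_to_tens x + vec_to_tens (y::'b \<Rightarrow> 'k)"
  by (simp add: vec_to_tens_def fun_eq_iff split: list.split)
lemma vtt_diff: "vec_to_tens (x - y) = vec_to_tens x - vec_to_tens (y::'b \<Rightarrow> 'k)"
  by (simp add: vec_to_tens_def fun_eq_iff split: list.split)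

lemma ool_gen:
  assumes A: "is_op Bs A" and B: "is_op Bs B" and y: "is_vec Bs y"
  shows "B.J (A, 0) (B, 0) (0, vec_to_tens y) = 0"
proof -
  let ?x = "(0, vec_to_tens y) :: ('b,'k) elt"
  have lx: "vec_to_tens y \<in> lie_poly Bs" using y by (rule lie_poly.gen)
  have xV: "?x \<in> V" using lx by (simp add: Ucar_iff is_op_zero)
  have AV: "(A, 0) \<in> V" and BV: "(B, 0) \<in> V" using A B by (auto simp: Ucar_iff lie_poly_zero)
  have By: "act B (vec_to_tens y) = to_U (apply_vec B y)" by (rule ax6[OF B y])
  have Ay: "act A (vec_to_tens y) = to_U (apply_vec A y)" by (rule ax6[OF A y])
  have sBy: "is_op Bs (strip (apply_vec B y))" using ax1[OF B lx] By by (simp add: to_U_Pair Ucar_iff)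
  have sAy: "is_op Bs (strip (apply_vec A y))" using ax1[OF A lx] Ay by (simp add: to_U_Pair Ucar_iff)
  have vB: "is_vec Bs (apply_vec B y [])" by (rule is_vec_av) (use B y in \<open>auto simp: is_op_def\<close>)
  have vA: "is_vec Bs (apply_vec A y [])" by (rule is_vec_av) (use A y in \<open>auto simp: is_op_def\<close>)
  have ABo: "is_op Bs (br_ops A B)" by (rule is_op_br_ops[OF A B])
  have i1: "br (B, 0) ?x = (strip (apply_vec B y), vec_to_tens (apply_vec B y []))"
    using br_ol[OF B] By by (simp add: to_U_Pair)
  have i3: "br (A, 0) ?x = (strip (apply_vec A y), vec_to_tens (apply_vec A y []))"
    using br_ol[OF A] Ay by (simp add: to_U_Pair)
  have t1: "br (A, 0) (br (B, 0) ?x) = (br_ops A (strip (apply_vec B y)), 0) + to_U (apply_vec A (apply_vec B y []))"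
    unfolding i1 unfolding br_Pair
    by (simp add: ax6[OF A vB] actu0[OF sBy] tbr_zero zero_prod_def)
  have t3: "br (B, 0) (br (A, 0) ?x) = (br_ops B (strip (apply_vec A y)), 0) + to_U (apply_vec B (apply_vec A y []))"
    unfolding i3 unfolding br_Pair
    by (simp add: ax6[OF B vA] actu0[OF sAy] tbr_zero zero_prod_def)
  have t2: "br (br (A, 0) (B, 0)) ?x = to_U (apply_vec (br_ops A B) y)"
    unfolding br_oo[OF A B] br_ol[OF ABo] by (rule ax6[OF ABo y])
  have n1: "br_ops A (strip (apply_vec B y)) [] = 0" using is_op_Nil[OF is_op_br_ops[OF A sBy]] .
  have n2: "br_ops B (strip (apply_vec A y)) [] = 0" using is_op_Nil[OF is_op_br_ops[OF B sAy]] .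
  have K: "apply_vec (br_ops A B) y w c =
    br_ops A (strip (apply_vec B y)) w c - br_ops B (strip (apply_vec A y)) w c
    + apply_vec A (apply_vec B y []) w c - apply_vec B (apply_vec A y []) w c" for w c
    by (rule KEY[OF A B y])
  have e: "to_U (apply_vec (br_ops A B) y) =
     (br_ops A (strip (apply_vec B y)), 0) + to_U (apply_vec A (apply_vec B y [])) -
     ((br_ops B (strip (apply_vec A y)), 0) + to_U (apply_vec B (apply_vec A y [])))"
  proof -
    have f: "strip (apply_vec (br_ops A B) y) = br_ops A (strip (apply_vec B y)) + strip (apply_vec A (apply_vec B y []))
       - (br_ops B (strip (apply_vec A y)) + strip (apply_vec B (apply_vec A y [])))"
    proof (intro ext)
      fix w c show "strip (apply_vec (br_ops A B) y) w c = (br_ops A (strip (apply_vec B y)) + strip (apply_vec A (apply_vec B y []))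
       - (br_ops B (strip (apply_vec A y)) + strip (apply_vec B (apply_vec A y [])))) w c"
        using n1 n2 K[of w c] by (cases "w = []") (simp_all add: strip_def)
    qed
    have s: "apply_vec (br_ops A B) y [] = apply_vec A (apply_vec B y []) [] - apply_vec B (apply_vec A y []) []"
      using n1 n2 K[of "[]"] by (simp add: fun_eq_iff)
    show ?thesis unfolding to_U_Pair by (simp add: f s vtt_diff)
  qed
  have "B.J (A, 0) (B, 0) ?x = br (A, 0) (br (B, 0) ?x) - br (br (A, 0) (B, 0)) ?x - br (B, 0) (br (A, 0) ?x)"
    by (rule B.J_D[OF AV BV xV])
  also have "\<dots> = 0" unfolding t1 t2 t3 e by simp
  finally show ?thesis .
qed

lemma ool_lie:
  assumes "u \<in> lie_poly Bs"
  shows "\<forall>A B. is_op Bs A \<and> is_op Bs B \<longrightarrow> B.J (A, 0) (B, 0) (0, u) = 0"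
  using assms
proof (induction rule: lie_poly.induct)
  case (gen x)
  then show ?case using ool_gen by blast
next
  case (add u v)
  show ?case
  proof (intro allI impI)
    fix A B :: "('b,'k) opr" assume h: "is_op Bs A \<and> is_op Bs B"
    have V: "(A, 0) \<in> V" "(B, 0) \<in> V" "(0, u) \<in> V" "(0, v) \<in> V"
      using h add.hyps by (auto simp: Ucar_iff lie_poly_zero is_op_zero)
    have "B.J (A, 0) (B, 0) (0, u + v) = B.J (A, 0) (B, 0) ((0, u) + (0, v))" by simp
    also have "\<dots> = B.J (A, 0) (B, 0) (0, u) + B.J (A, 0) (B, 0) (0, v)" by (rule B.J_add3[OF V])
    finally show "B.J (A, 0) (B, 0) (0, u + v) = 0" using add.IH h by simp
  qed
next
  case (smult u c)
  show ?case
  proof (intro allI impI)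
    fix A B :: "('b,'k) opr" assume h: "is_op Bs A \<and> is_op Bs B"
    have V: "(A, 0) \<in> V" "(B, 0) \<in> V" "(0, u) \<in> V"
      using h smult.hyps by (auto simp: Ucar_iff lie_poly_zero is_op_zero)
    have "(0, \<lambda>w. c * u w) = scaleU c (0, u)" by (simp add: scaleU_Pair zero_opr)
    then have "B.J (A, 0) (B, 0) (0, \<lambda>w. c * u w) = scaleU c (B.J (A, 0) (B, 0) (0, u))"
      using J_sc3[OF V] by simp
    then show "B.J (A, 0) (B, 0) (0, \<lambda>w. c * u w) = 0" using smult.IH h by (simp add: scaleU_zero)
  qed
next
  case (brk u v)
  show ?case
  proof (intro allI impI)
    fix A B :: "('b,'k) opr" assume h: "is_op Bs A \<and> is_op Bs B"
    have AO: "(A, 0) \<in> Os" and BO: "(B, 0) \<in> Os" using h by (auto simp: Os_def)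
    have uL: "(0, u) \<in> Ls" and vL: "(0, v) \<in> Ls" using brk.hyps by (auto simp: Ls_def)
    have IHu: "B.J a b (0, u) = 0" if ha: "a \<in> Os" and hb: "b \<in> Os" for a b
    proof -
      obtain A' B' where "a = (A', 0)" "b = (B', 0)" "is_op Bs A'" "is_op Bs B'"
        using ha hb unfolding Os_def by blast
      then show ?thesis using brk.IH(1) by blast
    qed
    have IHv: "B.J a b (0, v) = 0" if ha: "a \<in> Os" and hb: "b \<in> Os" for a b
    proof -
      obtain A' B' where "a = (A', 0)" "b = (B', 0)" "is_op Bs A'" "is_op Bs B'"
        using ha hb unfolding Os_def by blast
      then show ?thesis using brk.IH(2) by blast
    qed
    have "B.J (A, 0) (B, 0) (br (0, u) (0, v)) = 0"
      by (rule B.J_brk_step[OF Os_V Ls_V dec Os_br oll AO BO uL vL IHu IHv])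
    then show "B.J (A, 0) (B, 0) (0, tbr u v) = 0" using br_ll[OF brk.hyps] by simp
  qed
qed

lemma ool: "a \<in> Os \<Longrightarrow> b \<in> Os \<Longrightarrow> c \<in> Ls \<Longrightarrow> B.J a b c = 0"
proof -
  assume "a \<in> Os" "b \<in> Os" "c \<in> Ls"
  then obtain A B u where "a = (A, 0)" "b = (B, 0)" "c = (0, u)" "is_op Bs A" "is_op Bs B" "u \<in> lie_poly Bs"
    unfolding Os_def Ls_def by blast
  then show ?thesis using ool_lie[of u] by blast
qed

end


context actctx
begin

lemma bounded_zero: "is_op Bs X \<Longrightarrow> bounded X 0 \<Longrightarrow> X = 0"
proof (rule ext)
  fix w assume X: "is_op Bs X" and b: "bounded X 0"
  show "X w = 0 w"
  proof (cases w)
    case Nil then show ?thesis using is_op_Nil[OF X] by simp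
  next
    case (Cons a w') then show ?thesis using b by (auto simp: bounded_def)
  qed
qed

lemma J_zero1: "y \<in> V \<Longrightarrow> z \<in> V \<Longrightarrow> B.J 0 y z = 0"
  by (simp add: B.J_def B.br0l B.br0r B.brc)

lemma J_zero_any:
  assumes "x \<in> V" "y \<in> V" "z \<in> V" "x = 0 \<or> y = 0 \<or> z = 0"
  shows "B.J x y z = 0"
  using assms J_zero1 B.J_cyc by metis

lemma to_U_zero: "to_U M = 0 \<Longrightarrow> M = 0"
proof -
  assume h: "to_U M = 0"
  then have s: "strip M = 0" and v: "vec_to_tens (M []) = 0" by (simp_all add: to_U_Pair zero_prod_def)
  have "M [] c = 0" for c using fun_cong[OF v, of "[c]"] by (simp add: vec_to_tens_def)
  then have m0: "M [] = 0" by (simp add: fun_eq_iff)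
  show "M = 0"
  proof (rule ext)
    fix w show "M w = 0 w"
      using fun_cong[OF s, of w] m0 by (cases "w = []") (simp_all add: strip_def)
  qed
qed

lemma Os_add: "a \<in> Os \<Longrightarrow> b \<in> Os \<Longrightarrow> a + b \<in> Os"
  by (auto simp: Os_def is_op_add)

lemma bounded_strip_av:
  assumes "bounded C n"
  shows "bounded (strip (apply_vec C y)) (n - 1)"
  unfolding bounded_def
proof (intro allI impI)
  fix w assume h: "strip (apply_vec C y) w \<noteq> 0"
  then have "w \<noteq> []" and "apply_vec C y w \<noteq> 0" by (auto simp: strip_def)
  then obtain b where "C (b # w) \<noteq> 0" using av_nonzero by blast
  then have "length (b # w) \<le> n" using assms by (auto simp: bounded_def)
  then show "length w \<le> n - 1" by simp
qed

lemma split_act: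
  assumes C: "is_op Bs C" and y: "is_vec Bs y"
  shows "br (C, 0) (0, vec_to_tens y) = (strip (apply_vec C y), 0) + (0, vec_to_tens (apply_vec C y []))"
    and "is_op Bs (strip (apply_vec C y))" and "(0, vec_to_tens (apply_vec C y [])) \<in> Ls"
proof -
  have lx: "vec_to_tens y \<in> lie_poly Bs" using y by (rule lie_poly.gen)
  have e: "br (C, 0) (0, vec_to_tens y) = to_U (apply_vec C y)" using br_ol[OF C] ax6[OF C y] by simp
  show "br (C, 0) (0, vec_to_tens y) = (strip (apply_vec C y), 0) + (0, vec_to_tens (apply_vec C y []))"
    unfolding e by (simp add: to_U_Pair)
  have "to_U (apply_vec C y) \<in> V" using ax1[OF C lx] ax6[OF C y] by simp
  then show "is_op Bs (strip (apply_vec C y))" and "(0, vec_to_tens (apply_vec C y [])) \<in> Ls"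
    by (auto simp: to_U_Pair Ucar_iff Ls_def)
qed

lemma ooo_aux:
  "\<forall>A B C na nb nc. is_op Bs A \<and> is_op Bs B \<and> is_op Bs C \<and> bounded A na \<and> bounded B nb \<and> bounded C nc
     \<and> na + nb + nc \<le> n \<longrightarrow> B.J (A, 0) (B, 0) (C, 0) = 0"
proof (induction n rule: less_induct)
  case (less n)
  show ?case
  proof (intro allI impI, elim conjE)
    fix A B C :: "('b,'k) opr" and na nb nc
    assume hA: "is_op Bs A" and hB: "is_op Bs B" and hC: "is_op Bs C"
      and bA: "bounded A na" and bB: "bounded B nb" and bC: "bounded C nc" and le: "na + nb + nc \<le> n"
    have AO: "(A, 0) \<in> Os" and BO: "(B, 0) \<in> Os" and CO: "(C, 0) \<in> Os" using hA hB hC by (auto simp: Os_def)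
    have AV: "(A, 0) \<in> V" and BV: "(B, 0) \<in> V" and CV: "(C, 0) \<in> V" using AO BO CO Os_V by auto
    show "B.J (A, 0) (B, 0) (C, 0) = 0"
    proof (cases "na = 0 \<or> nb = 0 \<or> nc = 0")
      case True
      then have "A = 0 \<or> B = 0 \<or> C = 0" using bounded_zero hA hB hC bA bB bC by auto
      then have "(A, 0) = 0 \<or> (B, 0) = 0 \<or> (C, 0) = (0 :: ('b,'k) elt)" by (auto simp: zero_prod_def)
      then show ?thesis using J_zero_any[OF AV BV CV] by blast
    next
      case False
      then have pos: "na \<ge> 1" "nb \<ge> 1" "nc \<ge> 1" by auto
      have IH: "B.J (A', 0) (B', 0) (C', 0) = 0" if "is_op Bs A'" "is_op Bs B'" "is_op Bs C'"
        "bounded A' ma" "bounded B' mb" "bounded C' mc" "ma + mb + mc < n" for A' B' C' ma mb mc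
        using less.IH[of "ma + mb + mc"] that by blast
      let ?K = "B.J (A, 0) (B, 0) (C, 0)"
      have KO: "?K \<in> Os" unfolding B.J_def using AO BO CO by (intro Os_add Os_br)
      then obtain Kop where K: "?K = (Kop, 0)" and hK: "is_op Bs Kop" by (auto simp: Os_def)
      have Kx: "act Kop (vec_to_tens y) = 0" if y: "is_vec Bs y" for y
      proof -
        let ?x = "(0, vec_to_tens y) :: ('b,'k) elt"
        have xL: "?x \<in> Ls" using y by (auto simp: Ls_def intro: lie_poly.gen)
        have xV: "?x \<in> V" using xL Ls_V by auto
        have Jx: "\<And>p q. p \<in> Os \<Longrightarrow> q \<in> Os \<Longrightarrow> B.J p q ?x = 0" using ool xL by blast
        have ad: "br ?K ?x = B.J (A, 0) (B, 0) (br (C, 0) ?x) + B.J (A, 0) (br (B, 0) ?x) (C, 0)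
                    + B.J (br (A, 0) ?x) (B, 0) (C, 0)"
          by (rule B.J_ad[OF Os_V Os_br xV Jx AO BO CO])
        note sC = split_act[OF hC y] and sB = split_act[OF hB y] and sA = split_act[OF hA y]
        have lC: "(0, vec_to_tens (apply_vec C y [])) \<in> V" using sC(3) Ls_V by auto
        have lB: "(0, vec_to_tens (apply_vec B y [])) \<in> V" using sB(3) Ls_V by auto
        have lA: "(0, vec_to_tens (apply_vec A y [])) \<in> V" using sA(3) Ls_V by auto
        have oC: "(strip (apply_vec C y), 0) \<in> V" using sC(2) by (simp add: Ucar_iff lie_poly_zero)
        have oB: "(strip (apply_vec B y), 0) \<in> V" using sB(2) by (simp add: Ucar_iff lie_poly_zero)
        have oA: "(strip (apply_vec A y), 0) \<in> V" using sA(2) by (simp add: Ucar_iff lie_poly_zero)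
        have j1: "B.J (A, 0) (B, 0) (br (C, 0) ?x) = 0"
        proof -
          have "B.J (A, 0) (B, 0) (strip (apply_vec C y), 0) = 0"
            by (rule IH[OF hA hB sC(2) bA bB bounded_strip_av[OF bC]]) (use le pos in simp)
          moreover have "B.J (A, 0) (B, 0) (0, vec_to_tens (apply_vec C y [])) = 0"
            by (rule ool[OF AO BO sC(3)])
          ultimately show ?thesis unfolding sC(1) B.J_add3[OF AV BV oC lC] by simp
        qed
        have j2: "B.J (A, 0) (br (B, 0) ?x) (C, 0) = 0"
        proof -
          have "B.J (A, 0) (strip (apply_vec B y), 0) (C, 0) = 0"
            by (rule IH[OF hA sB(2) hC bA bounded_strip_av[OF bB] bC]) (use le pos in simp)
          moreover have "B.J (A, 0) (0, vec_to_tens (apply_vec B y [])) (C, 0) = 0"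
            using ool[OF CO AO sB(3)] B.J_cyc[of "(A, 0)" "(0, vec_to_tens (apply_vec B y []))" "(C, 0)"]
              B.J_cyc[of "(0, vec_to_tens (apply_vec B y []))" "(C, 0)" "(A, 0)"] by simp
          ultimately show ?thesis unfolding sB(1) B.J_add2[OF AV oB lB CV] by simp
        qed
        have j3: "B.J (br (A, 0) ?x) (B, 0) (C, 0) = 0"
        proof -
          have "B.J (strip (apply_vec A y), 0) (B, 0) (C, 0) = 0"
            by (rule IH[OF sA(2) hB hC bounded_strip_av[OF bA] bB bC]) (use le pos in simp)
          moreover have "B.J (0, vec_to_tens (apply_vec A y [])) (B, 0) (C, 0) = 0"
            using ool[OF BO CO sA(3)] B.J_cyc[of "(0, vec_to_tens (apply_vec A y []))" "(B, 0)" "(C, 0)"] by simp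
          ultimately show ?thesis unfolding sA(1) B.J_add1[OF oA lA BV CV] by simp
        qed
        have "br (Kop, 0) ?x = 0" using ad j1 j2 j3 K by simp
        then show ?thesis using br_ol[OF hK] by simp
      qed
      have "Kop = 0"
      proof (rule ext)
        fix w show "Kop w = 0 w"
        proof (cases w)
          case Nil then show ?thesis using is_op_Nil[OF hK] by simp
        next
          case (Cons b w')
          show ?thesis
          proof (cases "b \<in> Bs")
            case False
            then show ?thesis using hK Cons by (auto simp: is_op_def)
          next
            case True
            let ?y = "\<lambda>c. if c = b then (1::'k) else 0"
            have y: "is_vec Bs ?y" using True by (auto simp: is_vec_def)
            have "to_U (apply_vec Kop ?y) = 0" using Kx[OF y] ax6[OF hK y] by simp
            then have z: "apply_vec Kop ?y = 0" by (rule to_U_zero)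
            have "apply_vec Kop ?y w' = Kop (b # w')"
            proof -
              have "{c. ?y c \<noteq> 0} = {b}" by auto
              then show ?thesis by (simp add: apply_vec_def fun_eq_iff)
            qed
            then show ?thesis using z Cons by (simp add: fun_eq_iff)
          qed
        qed
      qed
      then show ?thesis using K by (simp add: zero_prod_def)
    qed
  qed
qed

lemma ooo: "a \<in> Os \<Longrightarrow> b \<in> Os \<Longrightarrow> c \<in> Os \<Longrightarrow> B.J a b c = 0"
proof -
  assume "a \<in> Os" "b \<in> Os" "c \<in> Os"
  then obtain A B C where abc: "a = (A, 0)" "b = (B, 0)" "c = (C, 0)" and h: "is_op Bs A" "is_op Bs B" "is_op Bs C"
    unfolding Os_def by blast
  obtain na nb nc where "bounded A na" "bounded B nb" "bounded C nc" using is_op_bounded h by metis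
  then show ?thesis using ooo_aux[of "na + nb + nc"] h abc by blast
qed

lemma jacobi: "x \<in> V \<Longrightarrow> y \<in> V \<Longrightarrow> z \<in> V \<Longrightarrow> B.J x y z = 0"
  by (rule B.J_decomp[OF Os_V Ls_V dec ooo ool oll lll])

end

theorem proposition2p3:
  fixes B :: "'b set"
  shows "lie_algebra_on (Ucar B :: ('b, 'k::field_char_0) elt set) scaleU (brU B)"
proof -
  interpret actctx B "actU B :: ('b,'k) opr \<Rightarrow> ('b,'k) tens \<Rightarrow> ('b,'k) elt"
    by unfold_locales (rule actU_is_action)
  have e: "brU B = brU_with (actU B :: ('b,'k) opr \<Rightarrow> ('b,'k) tens \<Rightarrow> ('b,'k) elt)"
    by (simp add: brU_def fun_eq_iff)
  show ?thesis
    unfolding lie_algebra_on_def e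
    using V_zero V_add V_sc V_br br_addl br_addr br_scl br_scr br_alt jacobi
    by (auto simp: B.J_def)
qed

end
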